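(* Let $N\ge1$, $\omega\in C^+_{\mathrm{inc}}$, and let $(\rho_\varepsilon)_{\varepsilon>0}\subset L^1(\mathbb{R}^N)$ be a family of radial mollifiers of the form $\rho_\varepsilon(h)=\varepsilon^{-N}\rho(h/\varepsilon)$ for some $\rho\in L^1(\mathbb{R}^N)$. Then for $f\in L^\infty(\mathbb{R}^N)$ the following are equivalent: (i) $f\in C^{0,1}(\mathbb{R}^N)$; (ii) $\displaystyle\limsup_{\varepsilon\downarrow0}\int_{\mathbb{R}^N}\rho_\varepsilon(h)\,\omega\!\left(\frac{\|f(\cdot+h)-f\|_{L^\infty(\mathbb{R}^N)}}{|h|}\right)\mathrm{d}h<\infty$. Moreover, there are constants $0<c\le C$ independent of $f$ such that \[c\,\omega\big([f]_{C^{0,1}(\mathbb{R}^N)}\big)\le\limsup_{\varepsilon\downarrow0}\int_{\mathbb{R}^N}\rho_\varepsilon(h)\,\omega\!\left(\frac{\|f(\cdot+h)-f\|_{L^\infty(\mathbb{R}^N)}}{|h|}\right)\mathrm{d}h\le C\,\omega\big([f]_{C^{0,1}(\mathbb{R}^N)}\big).\]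
   Context: Mollifiers: $\rho_\varepsilon\ge0$, $\int\rho_\varepsilon=1$, and $\lim_{\varepsilon\downarrow0}\int_{|z|\ge\delta}\rho_\varepsilon=0$ for all $\delta>0$. $C^{0,1}(\mathbb{R}^N)$ is the set of $f\in L^\infty(\mathbb{R}^N)$ with $[f]_{C^{0,1}}:=\sup_{h\ne0}|h|^{-1}\|f(\cdot+h)-f\|_{L^\infty}<\infty$. $C^+_{\mathrm{inc}}$ is the set of continuous increasing $\omega:[0,\infty)\to[0,\infty)$ with $\omega(0)=0$, $\lim_{t\to\infty}\omega(t)=\infty$, and roughly subadditive: there is $A>0$ with $\omega(t_1+t_2)\le A(\omega(t_1)+\omega(t_2))$ for all $t_1,t_2\ge0$. Convention $\omega(+\infty)=+\infty$. *)

theory Defs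
  imports "HOL-Analysis.Analysis" "HOL-Probability.Essential_Supremum"
begin

definition C_inc_plus :: "(real \<Rightarrow> real) \<Rightarrow> bool" where
  "C_inc_plus \<omega> \<longleftrightarrow>
     continuous_on {0..} \<omega> \<and> mono_on {0..} \<omega> \<and> (\<forall>t\<ge>0. \<omega> t \<ge> 0) \<and> \<omega> 0 = 0 \<and>
     filterlim \<omega> at_top at_top \<and>
     (\<exists>A>0. \<forall>t1 t2. t1 \<ge> 0 \<longrightarrow> t2 \<ge> 0 \<longrightarrow> \<omega> (t1 + t2) \<le> A * (\<omega> t1 + \<omega> t2))"

definition omega_ext :: "(real \<Rightarrow> real) \<Rightarrow> ennreal \<Rightarrow> ennreal" where
  "omega_ext \<omega> x = (if x = \<infinity> then \<infinity> else ennreal (\<omega> (enn2real x)))"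

definition Linf_norm :: "('a::euclidean_space \<Rightarrow> real) \<Rightarrow> ennreal" where
  "Linf_norm g = esssup lebesgue (\<lambda>x. ennreal \<bar>g x\<bar>)"

definition in_Linf :: "('a::euclidean_space \<Rightarrow> real) \<Rightarrow> bool" where
  "in_Linf f \<longleftrightarrow> f \<in> borel_measurable lebesgue \<and> Linf_norm f < \<infinity>"

definition lip_seminorm :: "('a::euclidean_space \<Rightarrow> real) \<Rightarrow> ennreal" where
  "lip_seminorm f = (SUP h\<in>-{0}. Linf_norm (\<lambda>x. f (x + h) - f x) / ennreal (norm h))"

definition radial_mollifier :: "('a::euclidean_space \<Rightarrow> real) \<Rightarrow> bool" where
  "radial_mollifier \<rho> \<longleftrightarrow> integrable lebesgue \<rho> \<and> (\<forall>x. \<rho> x \<ge> 0) \<and>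
     integral\<^sup>L lebesgue \<rho> = 1 \<and> (\<forall>x y. norm x = norm y \<longrightarrow> \<rho> x = \<rho> y)"

definition rescale :: "('a::euclidean_space \<Rightarrow> real) \<Rightarrow> real \<Rightarrow> 'a \<Rightarrow> real" where
  "rescale \<rho> \<epsilon> h = (1 / \<epsilon>) ^ DIM('a) * \<rho> ((1 / \<epsilon>) *\<^sub>R h)"

definition mollified_functional ::
  "(real \<Rightarrow> real) \<Rightarrow> ('a::euclidean_space \<Rightarrow> real) \<Rightarrow> ('a \<Rightarrow> real) \<Rightarrow> ennreal" where
  "mollified_functional \<omega> \<rho> f = Limsup (at_right 0) (\<lambda>\<epsilon>.
     \<integral>\<^sup>+ h. ennreal (rescale \<rho> \<epsilon> h) *
        omega_ext \<omega> (Linf_norm (\<lambda>x. f (x + h) - f x) / ennreal (norm h)) \<partial>lebesgue)"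

end

theory Submission
  imports Defs
begin



lemma nn_integral_lebesgue_affine:
  fixes f :: "'a::euclidean_space \<Rightarrow> ennreal"
  assumes f[measurable]: "f \<in> borel_measurable lebesgue" and c: "c \<noteq> 0"
  shows "(\<integral>\<^sup>+x. f x \<partial>lebesgue) = ennreal (\<bar>c\<bar>^DIM('a)) * (\<integral>\<^sup>+x. f (t + c *\<^sub>R x) \<partial>lebesgue)"
proof -
  have eqT: "(\<lambda>x. t + (\<Sum>j\<in>(Basis::'a set). (c * (x \<bullet> j)) *\<^sub>R j)) = (\<lambda>x. t + c *\<^sub>R x)"
    unfolding scaleR_scaleR[symmetric] scaleR_sum_right[symmetric] euclidean_representation by simp
  have L: "lebesgue = density (distr lebesgue lebesgue (\<lambda>x::'a. t + c *\<^sub>R x)) (\<lambda>_. ennreal (\<bar>c\<bar>^DIM('a)))"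
    using lebesgue_affine_euclidean[of "\<lambda>_. c" t] c unfolding eqT by (simp add: prod_constant)
  have M: "(\<lambda>x::'a. t + c *\<^sub>R x) \<in> lebesgue \<rightarrow>\<^sub>M lebesgue"
    using lebesgue_affine_measurable[of "\<lambda>_. c" t] c unfolding eqT by simp
  have "(\<integral>\<^sup>+x. f x \<partial>lebesgue) = (\<integral>\<^sup>+x. f x \<partial>density (distr lebesgue lebesgue (\<lambda>x::'a. t + c *\<^sub>R x)) (\<lambda>_. ennreal (\<bar>c\<bar>^DIM('a))))"
    using L by simp
  also have "\<dots> = \<integral>\<^sup>+ x. ennreal (\<bar>c\<bar>^DIM('a)) * f x \<partial>distr lebesgue lebesgue (\<lambda>x. t + c *\<^sub>R x)"
    by (subst nn_integral_density) auto
  also have "\<dots> = ennreal (\<bar>c\<bar>^DIM('a)) * integral\<^sup>N (distr lebesgue lebesgue (\<lambda>x. t + c *\<^sub>R x)) f"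
    using f measurable_distr_eq1 nn_integral_cmult by blast
  also have "\<dots> = ennreal (\<bar>c\<bar>^DIM('a)) * (\<integral>\<^sup>+x. f(t + c *\<^sub>R x) \<partial>lebesgue)"
    using M by (subst nn_integral_distr) auto
  finally show ?thesis .
qed

lemma affine_lebesgue_measurable[measurable]:
  "(\<lambda>x::'a::euclidean_space. t + c *\<^sub>R x) \<in> lebesgue \<rightarrow>\<^sub>M lebesgue"
proof -
  have eqT: "(\<lambda>x. t + (\<Sum>j\<in>(Basis::'a set). (c * (x \<bullet> j)) *\<^sub>R j)) = (\<lambda>x. t + c *\<^sub>R x)"
    unfolding scaleR_scaleR[symmetric] scaleR_sum_right[symmetric] euclidean_representation by simp
  show ?thesis
  proof (cases "c = 0")
    case True then show ?thesis by simp
  next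
    case False then show ?thesis
    using lebesgue_affine_measurable[of "\<lambda>_. c" t] unfolding eqT by simp
  qed
qed

lemma translate_lebesgue_measurable[measurable]:
  "(\<lambda>x::'a::euclidean_space. x + t) \<in> lebesgue \<rightarrow>\<^sub>M lebesgue"
  using affine_lebesgue_measurable[of t 1] by (simp add: add.commute)

lemma AE_lebesgue_affine:
  fixes P :: "'a::euclidean_space \<Rightarrow> bool"
  assumes c: "c \<noteq> 0" and P[measurable]: "Measurable.pred lebesgue P" and ae: "AE x in lebesgue. P x"
  shows "AE x in lebesgue. P (t + c *\<^sub>R x)"
proof -
  have eqT: "(\<lambda>x. t + (\<Sum>j\<in>(Basis::'a set). (c * (x \<bullet> j)) *\<^sub>R j)) = (\<lambda>x. t + c *\<^sub>R x)"
    unfolding scaleR_scaleR[symmetric] scaleR_sum_right[symmetric] euclidean_representation by simp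
  have L: "lebesgue = density (distr lebesgue lebesgue (\<lambda>x::'a. t + c *\<^sub>R x)) (\<lambda>_. ennreal (\<bar>c\<bar>^DIM('a)))"
    using lebesgue_affine_euclidean[of "\<lambda>_. c" t] c unfolding eqT by (simp add: prod_constant)
  from ae have "AE x in density (distr lebesgue lebesgue (\<lambda>x::'a. t + c *\<^sub>R x)) (\<lambda>_. ennreal (\<bar>c\<bar>^DIM('a))). P x"
    using ae by (simp only: L[symmetric])
  then have "AE x in distr lebesgue lebesgue (\<lambda>x::'a. t + c *\<^sub>R x). P x"
    using c by (subst (asm) AE_density) auto
  then show ?thesis
  proof (subst (asm) AE_distr_iff)
    show "{x \<in> space lebesgue. P x} \<in> sets lebesgue" by measurable
  qed auto
qed

lemma AE_lebesgue_translate: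
  fixes P :: "'a::euclidean_space \<Rightarrow> bool"
  assumes P[measurable]: "Measurable.pred lebesgue P" and ae: "AE x in lebesgue. P x"
  shows "AE x in lebesgue. P (x + t)"
  using AE_lebesgue_affine[OF _ P ae, of 1 t] by (simp add: add.commute)

definition DD :: "('a::euclidean_space \<Rightarrow> real) \<Rightarrow> 'a \<Rightarrow> ennreal" where
  "DD f h = Linf_norm (\<lambda>x. f (x + h) - f x)"

lemma DD_AE:
  "AE x in lebesgue. ennreal \<bar>f (x + h) - f x\<bar> \<le> DD f h"
  unfolding DD_def Linf_norm_def by (rule esssup_AE)

lemma DD_le:
  assumes [measurable]: "f \<in> borel_measurable lebesgue"
    and "AE x in lebesgue. ennreal \<bar>f (x + h) - f x\<bar> \<le> c"
  shows "DD f h \<le> c"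
  unfolding DD_def Linf_norm_def using assms by (intro esssup_I) auto

lemma DD_zero: "f \<in> borel_measurable lebesgue \<Longrightarrow> DD f 0 = 0"
  by (rule antisym[OF DD_le]) auto

lemma DD_sub:
  assumes f[measurable]: "f \<in> borel_measurable lebesgue"
  shows "DD f (h1 + h2) \<le> DD f h1 + DD f h2"
proof (rule DD_le[OF f])
  have a1: "AE x in lebesgue. ennreal \<bar>f (x + h2 + h1) - f (x + h2)\<bar> \<le> DD f h1"
    by (rule AE_lebesgue_translate[OF _ DD_AE]) measurable
  show "AE x in lebesgue. ennreal \<bar>f (x + (h1 + h2)) - f x\<bar> \<le> DD f h1 + DD f h2"
    using a1 DD_AE[of f h2]
  proof eventually_elim
    case (elim x)
    have "ennreal \<bar>f (x + (h1 + h2)) - f x\<bar> \<le> ennreal (\<bar>f (x + h2 + h1) - f (x + h2)\<bar> + \<bar>f (x + h2) - f x\<bar>)"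
      by (intro ennreal_leI) (simp add: algebra_simps)
    also have "\<dots> = ennreal \<bar>f (x + h2 + h1) - f (x + h2)\<bar> + ennreal \<bar>f (x + h2) - f x\<bar>"
      by (simp add: ennreal_plus)
    also have "\<dots> \<le> DD f h1 + DD f h2" using elim by (intro add_mono) auto
    finally show ?case .
  qed
qed

lemma DD_uminus:
  assumes f[measurable]: "f \<in> borel_measurable lebesgue"
  shows "DD f (- h) = DD f h"
proof (rule antisym)
  show "DD f (- h) \<le> DD f h"
  proof (rule DD_le[OF f])
    have "AE x in lebesgue. ennreal \<bar>f (x + (- h) + h) - f (x + - h)\<bar> \<le> DD f h"
      by (rule AE_lebesgue_translate[OF _ DD_AE]) measurable
    then show "AE x in lebesgue. ennreal \<bar>f (x + - h) - f x\<bar> \<le> DD f h"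
      by eventually_elim (simp add: abs_minus_commute)
  qed
  show "DD f h \<le> DD f (- h)"
  proof (rule DD_le[OF f])
    have "AE x in lebesgue. ennreal \<bar>f (x + h + - h) - f (x + h)\<bar> \<le> DD f (- h)"
      by (rule AE_lebesgue_translate[OF _ DD_AE]) measurable
    then show "AE x in lebesgue. ennreal \<bar>f (x + h) - f x\<bar> \<le> DD f (- h)"
      by eventually_elim (simp add: abs_minus_commute)
  qed
qed




lemma borel_version:
  fixes f :: "'a::euclidean_space \<Rightarrow> real"
  assumes "f \<in> borel_measurable lebesgue"
  obtains g where "g \<in> borel_measurable borel" "AE x in lebesgue. f x = g x"
proof -
  from completion_ex_borel_measurable_real[OF assms]
  obtain g where "g \<in> borel_measurable lborel" "AE x in lborel. f x = g x" by blast
  then show ?thesis using that AE_completion by auto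
qed

lemma DD_cong_AE:
  assumes [measurable]: "f \<in> borel_measurable lebesgue" "g \<in> borel_measurable lebesgue"
    and ae: "AE x in lebesgue. f x = g x"
  shows "DD f h = DD g h"
proof -
  have [measurable]: "Measurable.pred lebesgue (\<lambda>x. f x = g x)" by measurable
  have "AE x in lebesgue. f (x + h) = g (x + h)"
    by (rule AE_lebesgue_translate[OF _ ae]) measurable
  with ae have "AE x in lebesgue. ennreal \<bar>f (x + h) - f x\<bar> = ennreal \<bar>g (x + h) - g x\<bar>"
    by eventually_elim auto
  then show ?thesis unfolding DD_def Linf_norm_def
    by (intro esssup_AE_cong) auto
qed

lemma emeasure_lebesgue_borel:
  assumes "S \<in> sets borel"
  shows "emeasure lebesgue S = emeasure lborel S"
proof -
  have "emeasure lebesgue S = (\<integral>\<^sup>+x. indicator S x \<partial>lebesgue)"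
    using assms by (simp add: nn_integral_indicator)
  also have "\<dots> = (\<integral>\<^sup>+x. indicator S x \<partial>lborel)" by (rule nn_integral_completion)
  also have "\<dots> = emeasure lborel S" using assms by (simp add: nn_integral_indicator)
  finally show ?thesis .
qed

lemma DD_gt_iff:
  fixes g :: "'a::euclidean_space \<Rightarrow> real"
  assumes g[measurable]: "g \<in> borel_measurable borel"
  shows "c < DD g h \<longleftrightarrow> 0 < emeasure lborel {x. c < ennreal \<bar>g (x + h) - g x\<bar>}"
proof -
  have S: "{x. c < ennreal \<bar>g (x + h) - g x\<bar>} \<in> sets borel" by measurable
  have gl[measurable]: "g \<in> borel_measurable lebesgue"
    using g by (metis measurable_completion measurable_lborel2)
  have E: "emeasure lebesgue {x. c < ennreal \<bar>g (x + h) - g x\<bar>} = emeasure lborel {x. c < ennreal \<bar>g (x + h) - g x\<bar>}"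
    by (rule emeasure_lebesgue_borel[OF S])
  show ?thesis
  proof
    assume "c < DD g h"
    then have "0 < emeasure lebesgue {x \<in> space lebesgue. c < ennreal \<bar>g (x + h) - g x\<bar>}"
      unfolding DD_def Linf_norm_def by (intro esssup_pos_measure) auto
    then show "0 < emeasure lborel {x. c < ennreal \<bar>g (x + h) - g x\<bar>}" using E by simp
  next
    assume pos: "0 < emeasure lborel {x. c < ennreal \<bar>g (x + h) - g x\<bar>}"
    show "c < DD g h"
    proof (rule ccontr)
      assume "\<not> c < DD g h"
      then have "DD g h \<le> c" by simp
      have "AE x in lebesgue. \<not> c < ennreal \<bar>g (x + h) - g x\<bar>"
        using DD_AE[of g h]
      proof eventually_elim
        case (elim x) then show ?case using \<open>DD g h \<le> c\<close> by (meson le_less_trans not_le order_trans)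
      qed
      then have "emeasure lebesgue {x. c < ennreal \<bar>g (x + h) - g x\<bar>} = 0"
        using S by (subst (asm) AE_iff_measurable[where N="{x. c < ennreal \<bar>g (x + h) - g x\<bar>}"]) auto
      with E pos show False by simp
    qed
  qed
qed

lemma bad_set_borel:
  fixes f :: "'a::euclidean_space \<Rightarrow> real"
  assumes f[measurable]: "f \<in> borel_measurable lebesgue"
  shows "{h. ennreal (G * norm h) < DD f h} \<in> sets borel"
proof -
  obtain g where g[measurable]: "g \<in> borel_measurable borel" and ae: "AE x in lebesgue. f x = g x"
    using borel_version[OF f] by blast
  have gl[measurable]: "g \<in> borel_measurable lebesgue"
    using g by (metis measurable_completion measurable_lborel2)
  have eq: "DD f h = DD g h" for h by (rule DD_cong_AE[OF f gl ae])
  define Q where "Q = {p::'a\<times>'a. ennreal (G * norm (fst p)) < ennreal \<bar>g (snd p + fst p) - g (snd p)\<bar>}"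
  have c1: "continuous_on UNIV (\<lambda>p::'a\<times>'a. snd p + fst p)" by (intro continuous_intros)
  have m1[measurable]: "(\<lambda>p::'a\<times>'a. snd p + fst p) \<in> borel_measurable borel"
    using borel_measurable_continuous_onI[OF c1] by simp
  have m2[measurable]: "(\<lambda>p::'a\<times>'a. g (snd p + fst p)) \<in> borel_measurable borel"
    using measurable_compose[OF m1 g] by (simp add: o_def)
  have m3[measurable]: "(\<lambda>p::'a\<times>'a. g (snd p)) \<in> borel_measurable borel"
    using measurable_compose[OF borel_measurable_continuous_onI[OF continuous_on_snd[OF continuous_on_id]] g]
    by (simp add: o_def)
  have m4[measurable]: "(\<lambda>p::'a\<times>'a. norm (fst p)) \<in> borel_measurable borel"
    by (intro borel_measurable_continuous_onI continuous_intros)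
  have "Q \<in> sets (borel :: ('a\<times>'a) measure)"
    unfolding Q_def by measurable
  then have "Q \<in> sets (lborel \<Otimes>\<^sub>M lborel)"
    unfolding lborel_prod by simp
  then have m: "(\<lambda>h. emeasure lborel (Pair h -` Q)) \<in> borel_measurable lborel"
    by (rule lborel.measurable_emeasure_Pair)
  have "{h. ennreal (G * norm h) < DD f h} = {h. 0 < emeasure lborel (Pair h -` Q)}"
    unfolding eq DD_gt_iff[OF g] Q_def by (simp add: vimage_def)
  also have "\<dots> \<in> sets borel" using m by measurable
  finally show ?thesis .
qed




lemma reflect_half:
  fixes S :: "'a::euclidean_space set"
  assumes S: "S \<in> sets lebesgue"
    and disj: "\<And>x. x \<in> ball c r \<Longrightarrow> x \<in> S \<Longrightarrow> 2 *\<^sub>R c - x \<in> S \<Longrightarrow> False"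
  shows "emeasure lebesgue (ball c r) \<le> 2 * emeasure lebesgue (ball c r - S)"
proof -
  let ?B = "ball c r"
  let ?R = "\<lambda>x::'a. (-1) *\<^sub>R x + 2 *\<^sub>R c"
  have B: "?B \<in> sets lebesgue" by simp
  have sub: "?R ` (?B \<inter> S) \<subseteq> ?B - S"
  proof
    fix y assume "y \<in> ?R ` (?B \<inter> S)"
    then obtain x where x: "x \<in> ?B" "x \<in> S" "y = 2 *\<^sub>R c - x" by auto
    have "c - y = - (c - x)" using x(3) by (simp add: scaleR_2 algebra_simps)
    then have "dist c y = dist c x" by (metis dist_norm norm_minus_cancel)
    then have "y \<in> ?B" using x(1) by simp
    moreover have "y \<notin> S" using disj[OF x(1) x(2)] x(3) by auto
    ultimately show "y \<in> ?B - S" by simp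
  qed
  have "emeasure lebesgue (?B \<inter> S) = emeasure lebesgue (?R ` (?B \<inter> S))"
    using emeasure_lebesgue_affine[of "-1" "2 *\<^sub>R c" "?B \<inter> S"] by simp
  also have "\<dots> \<le> emeasure lebesgue (?B - S)"
    by (rule emeasure_mono[OF sub]) (use B S in auto)
  finally have le: "emeasure lebesgue (?B \<inter> S) \<le> emeasure lebesgue (?B - S)" .
  have "emeasure lebesgue ?B = emeasure lebesgue ((?B \<inter> S) \<union> (?B - S))" by (metis Int_Diff_Un)
  also have "\<dots> = emeasure lebesgue (?B \<inter> S) + emeasure lebesgue (?B - S)"
    by (rule plus_emeasure[symmetric]) (use B S in auto)
  also have "\<dots> \<le> emeasure lebesgue (?B - S) + emeasure lebesgue (?B - S)"
    using le by (intro add_mono) auto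
  also have "\<dots> = 2 * emeasure lebesgue (?B - S)" by (simp add: mult_2)
  finally show ?thesis .
qed

lemma half_add_half: "h /\<^sub>R 2 + h /\<^sub>R 2 = (h::'a::real_vector)"
  by (metis field_sum_of_halves scaleR_add_left scaleR_one divide_inverse_commute inverse_eq_divide)

definition Bad :: "('a::euclidean_space \<Rightarrow> real) \<Rightarrow> real \<Rightarrow> 'a set" where
  "Bad f G = {h. ennreal (G * norm h) < DD f h}"

lemma very_bad_half:
  fixes f :: "'a::euclidean_space \<Rightarrow> real"
  assumes f[measurable]: "f \<in> borel_measurable lebesgue" and G: "0 \<le> G"
    and vb: "ennreal (5/4 * G * norm h) < DD f h"
  shows "emeasure lebesgue (ball (h /\<^sub>R 2) (norm h / 8)) \<le> 2 * emeasure lebesgue (ball (h /\<^sub>R 2) (norm h / 8) \<inter> Bad f G)"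
proof -
  let ?S = "- Bad f G"
  have S: "?S \<in> sets lebesgue"
    using bad_set_borel[OF f, of G] unfolding Bad_def by (simp add: sets.compl_sets)
  have eq: "ball (h /\<^sub>R 2) (norm h / 8) - ?S = ball (h /\<^sub>R 2) (norm h / 8) \<inter> Bad f G" by auto
  have "emeasure lebesgue (ball (h /\<^sub>R 2) (norm h / 8)) \<le> 2 * emeasure lebesgue (ball (h /\<^sub>R 2) (norm h / 8) - ?S)"
  proof (rule reflect_half[OF S])
    fix x assume x: "x \<in> ball (h /\<^sub>R 2) (norm h / 8)" "x \<in> ?S" "2 *\<^sub>R (h /\<^sub>R 2) - x \<in> ?S"
    have hx: "2 *\<^sub>R (h /\<^sub>R 2) - x = h - x" by simp
    have dx: "norm (x - h /\<^sub>R 2) < norm h / 8" using x(1) by (simp add: dist_norm norm_minus_commute)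
    have n1: "norm x \<le> 5/8 * norm h"
    proof -
      have "norm x \<le> norm (h /\<^sub>R 2) + norm (x - h /\<^sub>R 2)" by (rule norm_triangle_sub)
      also have "\<dots> \<le> 5/8 * norm h" using dx by simp
      finally show ?thesis .
    qed
    have n2: "norm (h - x) \<le> 5/8 * norm h"
    proof -
      have "h - x = h /\<^sub>R 2 - (x - h /\<^sub>R 2)" by (metis half_add_half add_diff_cancel_left' diff_diff_eq2 add.commute)
      then have "norm (h - x) \<le> norm (h /\<^sub>R 2) + norm (x - h /\<^sub>R 2)" by (metis norm_triangle_ineq4)
      also have "\<dots> \<le> 5/8 * norm h" using dx by simp
      finally show ?thesis .
    qed
    have g1: "DD f x \<le> ennreal (G * norm x)" using x(2) by (simp add: Bad_def not_less)
    have g2: "DD f (h - x) \<le> ennreal (G * norm (h - x))" using x(3) hx by (simp add: Bad_def not_less)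
    have "DD f h \<le> DD f x + DD f (h - x)" using DD_sub[OF f, of x "h - x"] by simp
    also have "\<dots> \<le> ennreal (G * norm x) + ennreal (G * norm (h - x))" using g1 g2 by (rule add_mono)
    also have "\<dots> = ennreal (G * norm x + G * norm (h - x))" using G by (simp add: ennreal_plus)
    also have "\<dots> \<le> ennreal (5/4 * G * norm h)"
    proof (rule ennreal_leI)
      have "G * norm x + G * norm (h - x) = G * (norm x + norm (h - x))" by (simp add: algebra_simps)
      also have "\<dots> \<le> G * (5/4 * norm h)" using n1 n2 G by (intro mult_left_mono) auto
      finally show "G * norm x + G * norm (h - x) \<le> 5/4 * G * norm h" by simp
    qed
    finally show False using vb by simp
  qed
  then show ?thesis using eq by simp
qed

lemma very_bad_half_step:
  fixes f :: "'a::euclidean_space \<Rightarrow> real"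
  assumes f[measurable]: "f \<in> borel_measurable lebesgue" and G: "0 \<le> G"
    and vb: "ennreal (K * norm h) < DD f h" and K: "0 \<le> K"
  shows "ennreal (K * norm (h /\<^sub>R 2)) < DD f (h /\<^sub>R 2)"
proof (rule ccontr)
  assume "\<not> ?thesis"
  then have le: "DD f (h /\<^sub>R 2) \<le> ennreal (K * norm (h /\<^sub>R 2))" by simp
  have "DD f h \<le> DD f (h /\<^sub>R 2) + DD f (h /\<^sub>R 2)" using DD_sub[OF f, of "h /\<^sub>R 2" "h /\<^sub>R 2"] half_add_half[of h]
    by simp
  also have "\<dots> \<le> ennreal (K * norm (h /\<^sub>R 2)) + ennreal (K * norm (h /\<^sub>R 2))" using le by (intro add_mono)
  also have "\<dots> = ennreal (K * norm h)" using K by (simp add: ennreal_plus[symmetric])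
  finally show False using vb by simp
qed




lemma emeasure_lborel_scale_preimage:
  fixes A :: "'a::euclidean_space set"
  assumes c: "c \<noteq> 0" and A: "A \<in> sets borel"
  shows "emeasure lborel {x. c *\<^sub>R x \<in> A} = ennreal (\<bar>1/c\<bar>^DIM('a)) * emeasure lborel A"
proof -
  have eq: "{x. c *\<^sub>R x \<in> A} = (\<lambda>x. (1/c) *\<^sub>R x + 0) ` A"
  proof safe
    fix x assume "c *\<^sub>R x \<in> A"
    then show "x \<in> (\<lambda>x. (1/c) *\<^sub>R x + 0) ` A" using c by (intro image_eqI[of _ _ "c *\<^sub>R x"]) auto
  qed (use c in auto)
  have B: "{x. c *\<^sub>R x \<in> A} \<in> sets borel"
    using A by measurable
  have "emeasure lborel {x. c *\<^sub>R x \<in> A} = emeasure lebesgue {x. c *\<^sub>R x \<in> A}"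
    using emeasure_lebesgue_borel[OF B] by simp
  also have "\<dots> = ennreal (\<bar>1/c\<bar>^DIM('a)) * emeasure lebesgue A"
    unfolding eq by (rule emeasure_lebesgue_affine)
  also have "\<dots> = ennreal (\<bar>1/c\<bar>^DIM('a)) * emeasure lborel A"
    using emeasure_lebesgue_borel[OF A] by simp
  finally show ?thesis .
qed

lemma AE_lborel_exists:
  assumes "AE x in (lborel :: 'a::euclidean_space measure). P x"
  shows "\<exists>x. P x"
proof (rule ccontr)
  assume "\<not> (\<exists>x. P x)"
  then have "AE x in (lborel :: 'a measure). False" using assms by (auto elim: eventually_mono)
  then have "ae_filter (lborel :: 'a measure) = bot" using trivial_limit_def by blast
  then show False by (simp add: ae_filter_eq_bot_iff)
qed

lemma norm_preimage_null:
  fixes T :: "real set"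
  assumes T[measurable]: "T \<in> sets borel" and T0: "emeasure lborel T = 0"
  shows "emeasure (lborel :: 'a::euclidean_space measure) {u. norm u \<in> T} = 0"
proof -
  define \<nu> where "\<nu> = emeasure (lborel :: 'a measure) {u. norm u \<in> T}"
  have NT[measurable]: "{u::'a. norm u \<in> T} \<in> sets borel" by measurable
  define F where "F = (\<lambda>(l::real) (u::'a). indicator {1..2} l * indicator T (l * norm u) :: ennreal)"
  have Fm: "case_prod F \<in> borel_measurable (lborel \<Otimes>\<^sub>M lborel)"
    unfolding F_def by measurable
  have inner1: "(\<integral>\<^sup>+u. F l u \<partial>lborel) \<ge> indicator {1..2} l * ennreal ((1/2)^DIM('a)) * \<nu>" for l
  proof (cases "l \<in> {1..2}")
    case True
    then have l: "l > 0" by auto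
    have "(\<integral>\<^sup>+u. F l u \<partial>lborel) = (\<integral>\<^sup>+u. indicator {u. l *\<^sub>R u \<in> {v::'a. norm v \<in> T}} u \<partial>lborel)"
      unfolding F_def using True l by (intro nn_integral_cong) (auto simp: indicator_def)
    also have "\<dots> = emeasure lborel {u. l *\<^sub>R u \<in> {v::'a. norm v \<in> T}}"
      by (intro nn_integral_indicator) measurable
    also have "\<dots> = ennreal (\<bar>1/l\<bar>^DIM('a)) * \<nu>"
      unfolding \<nu>_def using l by (intro emeasure_lborel_scale_preimage NT) auto
    also have "\<dots> \<ge> ennreal ((1/2)^DIM('a)) * \<nu>"
      using True by (intro mult_right_mono ennreal_leI power_mono) (auto simp: field_simps)
    finally show ?thesis using True by simp
  qed simp
  have inner2: "AE u in lborel. (\<integral>\<^sup>+l. F l u \<partial>lborel) = 0"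
    using AE_lborel_singleton[of "0::'a"]
  proof eventually_elim
    case (elim u)
    then have nu: "norm u > 0" by simp
    have "(\<integral>\<^sup>+l. F l u \<partial>lborel) \<le> (\<integral>\<^sup>+l. indicator T (norm u * l) \<partial>lborel)"
      unfolding F_def by (intro nn_integral_mono) (auto simp: indicator_def mult.commute)
    also have "(\<integral>\<^sup>+l. indicator T (norm u * l) \<partial>lborel) = 0"
    proof -
      have "(\<integral>\<^sup>+x. indicator T x \<partial>lborel) = \<bar>norm u\<bar> * (\<integral>\<^sup>+l. indicator T (0 + norm u * l) \<partial>lborel)"
        by (rule nn_integral_real_affine) (use nu in auto)
      then have "ennreal (norm u) * (\<integral>\<^sup>+l. indicator T (norm u * l) \<partial>lborel) = 0"
        using T0 by (simp add: nn_integral_indicator)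
      then show ?thesis using nu by simp
    qed
    finally show ?case by simp
  qed
  have "ennreal ((1/2)^DIM('a)) * \<nu> = (\<integral>\<^sup>+(l::real). indicator {1..2} l * (ennreal ((1/2)^DIM('a)) * \<nu>) \<partial>lborel)"
    by (subst nn_integral_multc) (auto simp: nn_integral_indicator)
  also have "\<dots> \<le> (\<integral>\<^sup>+l. (\<integral>\<^sup>+u. F l u \<partial>lborel) \<partial>lborel)"
    using inner1 by (intro nn_integral_mono) (simp add: mult.assoc)
  also have "\<dots> = (\<integral>\<^sup>+u. (\<integral>\<^sup>+l. F l u \<partial>lborel) \<partial>lborel)"
    by (rule lborel_pair.Fubini'[symmetric, OF Fm])
  also have "\<dots> = (\<integral>\<^sup>+(u::'a). 0 \<partial>lborel)"
    using inner2 by (intro nn_integral_cong_AE) auto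
  finally have "ennreal ((1/2)^DIM('a)) * \<nu> = 0" by simp
  then show ?thesis unfolding \<nu>_def by simp
qed




lemma radial_borel_version:
  fixes \<rho> :: "'a::euclidean_space \<Rightarrow> real"
  assumes \<rho>m: "\<rho> \<in> borel_measurable lebesgue"
    and rad: "\<And>x y. norm x = norm y \<Longrightarrow> \<rho> x = \<rho> y"
  obtains P :: "real \<Rightarrow> real" and T :: "real set"
  where "P \<in> borel_measurable borel" "T \<in> sets borel" "emeasure lborel T = 0"
    "\<And>u. norm u \<notin> T \<Longrightarrow> \<rho> u = P (norm u)"
proof -
  obtain \<rho>' where \<rho>'[measurable]: "\<rho>' \<in> borel_measurable borel" and ae: "AE x in lebesgue. \<rho> x = \<rho>' x"
    using borel_version[OF \<rho>m] by blast
  have "AE x in lborel. \<rho> x = \<rho>' x" using ae by (simp add: AE_completion_iff)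
  then obtain Z where Z: "{x. \<rho> x \<noteq> \<rho>' x} \<subseteq> Z" "emeasure lborel Z = 0" "Z \<in> sets lborel"
    by (auto elim!: AE_E)
  have Zb[measurable]: "Z \<in> sets borel" using Z(3) by simp
  define F where "F = (\<lambda>(s::real) (h::'a). indicator Z (s *\<^sub>R h) :: ennreal)"
  have Fm: "case_prod F \<in> borel_measurable (lborel \<Otimes>\<^sub>M lborel)"
    unfolding F_def by measurable
  have i1: "AE s in lborel. (\<integral>\<^sup>+h. F s h \<partial>lborel) = 0"
    using AE_lborel_singleton[of "0::real"]
  proof eventually_elim
    case (elim s)
    have mS: "{h::'a. s *\<^sub>R h \<in> Z} \<in> sets lborel" by measurable
    have "(\<integral>\<^sup>+h. F s h \<partial>lborel) = (\<integral>\<^sup>+h. indicator {h::'a. s *\<^sub>R h \<in> Z} h \<partial>lborel)"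
      unfolding F_def by (intro nn_integral_cong) (simp add: indicator_def)
    also have "\<dots> = emeasure lborel {h::'a. s *\<^sub>R h \<in> Z}"
      using mS by (rule nn_integral_indicator)
    also have "\<dots> = 0" using emeasure_lborel_scale_preimage[OF elim Zb] Z(2) by simp
    finally show ?case .
  qed
  have "(\<integral>\<^sup>+h. (\<integral>\<^sup>+s. F s h \<partial>lborel) \<partial>lborel) = (\<integral>\<^sup>+s. (\<integral>\<^sup>+h. F s h \<partial>lborel) \<partial>lborel)"
    by (rule lborel_pair.Fubini'[OF Fm])
  also have "\<dots> = (\<integral>\<^sup>+(s::real). 0 \<partial>lborel)"
    using i1 by (intro nn_integral_cong_AE) auto
  finally have "(\<integral>\<^sup>+h. (\<integral>\<^sup>+s. F s h \<partial>lborel) \<partial>lborel) = 0" by simp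
  then have "AE h in lborel. (\<integral>\<^sup>+s. F s h \<partial>lborel) = 0"
    using Fm by (subst (asm) nn_integral_0_iff_AE) (measurable, simp)
  then have "AE h in lborel. h \<noteq> (0::'a) \<and> (\<integral>\<^sup>+s. F s h \<partial>lborel) = 0"
    using AE_lborel_singleton[of "0::'a"] by eventually_elim auto
  then obtain h0 :: 'a where h0: "h0 \<noteq> 0" "(\<integral>\<^sup>+s. F s h0 \<partial>lborel) = 0"
    using AE_lborel_exists by blast
  have nh0: "norm h0 > 0" using h0 by simp
  define P where "P = (\<lambda>t. \<rho>' ((t / norm h0) *\<^sub>R h0))"
  define T where "T = {t. (t / norm h0) *\<^sub>R h0 \<in> Z}"
  have Pm: "P \<in> borel_measurable borel" unfolding P_def by measurable
  have Tm[measurable]: "T \<in> sets borel" unfolding T_def by measurable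
  have "emeasure lborel T = (\<integral>\<^sup>+t. indicator T t \<partial>lborel)" by (simp add: nn_integral_indicator)
  also have "\<dots> = \<bar>norm h0\<bar> * (\<integral>\<^sup>+s. indicator T (0 + norm h0 * s) \<partial>lborel)"
    by (rule nn_integral_real_affine) (use nh0 in auto)
  also have "(\<integral>\<^sup>+s. indicator T (0 + norm h0 * s) \<partial>lborel) = (\<integral>\<^sup>+s. F s h0 \<partial>lborel)"
    unfolding T_def F_def using nh0 by (intro nn_integral_cong) (simp add: indicator_def)
  finally have T0: "emeasure lborel T = 0" using h0 by simp
  have eq: "\<rho> u = P (norm u)" if u: "norm u \<notin> T" for u
  proof -
    let ?w = "(norm u / norm h0) *\<^sub>R h0"
    have nw: "norm ?w = norm u" using nh0 by simp
    have "?w \<notin> Z" using u unfolding T_def by simp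
    then have "\<rho> ?w = \<rho>' ?w" using Z(1) by auto
    then show ?thesis using rad[OF nw[symmetric]] unfolding P_def by simp
  qed
  show ?thesis using that[OF Pm Tm T0 eq] .
qed




lemma radial_J_pos:
  fixes \<rho> :: "'a::euclidean_space \<Rightarrow> real"
  assumes Pm[measurable]: "P \<in> borel_measurable borel" and Tm[measurable]: "T \<in> sets borel"
    and T0: "emeasure lborel T = 0"
    and rep: "\<And>u. norm u \<notin> T \<Longrightarrow> \<rho> u = P (norm u)"
    and nz: "(\<integral>\<^sup>+u. ennreal (\<rho> u) \<partial>lborel) \<noteq> 0"
  shows "\<exists>r0 R0. 0 < r0 \<and> r0 \<le> R0 \<and>
           0 < (\<integral>\<^sup>+s. indicator {r0..R0} s * ennreal (s^(DIM('a)-1) * P s) \<partial>lborel)"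
proof (rule ccontr)
  assume "\<not> ?thesis"
  then have z: "(\<integral>\<^sup>+s. indicator {r0..R0} s * ennreal (s^(DIM('a)-1) * P s) \<partial>lborel) = 0"
    if "0 < r0" "r0 \<le> R0" for r0 R0 using that by (meson not_gr_zero)
  define Q where "Q = (\<lambda>(n::nat) (s::real). indicator {1/(real n+1)..real n+1} s * ennreal (s^(DIM('a)-1) * P s) = (0::ennreal))"
  have "\<forall>n::nat. AE s in lborel. Q n s"
  proof
    fix n :: nat
    have "(\<integral>\<^sup>+s. indicator {1/(real n+1)..real n+1} s * ennreal (s^(DIM('a)-1) * P s) \<partial>lborel) = 0"
      by (rule z) (auto simp: field_simps)
    then show "AE s in lborel. Q n s" unfolding Q_def
      by (subst (asm) nn_integral_0_iff_AE) auto
  qed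
  then have "AE s in lborel. \<forall>n. Q n s" by (simp add: AE_all_countable)
  then obtain T3 where T3: "{s. \<not> (\<forall>n. Q n s)} \<subseteq> T3"
     "emeasure lborel T3 = 0" "T3 \<in> sets lborel"
    by (auto elim!: AE_E)
  have Pz: "P s \<le> 0" if s: "s > 0" "s \<notin> T3" for s
  proof -
    obtain n :: nat where n: "s + 1/s \<le> n" using real_arch_simple by blast
    have iss: "1/s > 0" using s by simp
    have a: "1/s \<le> real n + 1" using n iss s(1) by linarith
    have b: "s \<le> real n + 1" using n iss s(1) by linarith
    have "1 \<le> (real n + 1) * s" using a s by (simp add: divide_le_eq)
    then have "1/(real n+1) \<le> s" by (simp add: divide_le_eq mult.commute)
    then have "s \<in> {1/(real n+1)..real n+1}" using b by simp
    moreover have "Q n s" using T3(1) s(2) by blast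
    ultimately have "ennreal (s^(DIM('a)-1) * P s) = 0" unfolding Q_def by simp
    then have "s^(DIM('a)-1) * P s \<le> 0" by (simp add: ennreal_eq_0_iff)
    moreover have "s^(DIM('a)-1) > 0" using s by simp
    ultimately show ?thesis by (simp add: mult_le_0_iff)
  qed
  define T' where "T' = T \<union> T3 \<union> {0}"
  have T'n: "T' \<in> null_sets lborel"
  proof -
    have "T \<in> null_sets lborel" using T0 Tm by (simp add: null_sets_def)
    moreover have "T3 \<in> null_sets lborel" using T3 by (simp add: null_sets_def)
    moreover have "{0::real} \<in> null_sets lborel" by (rule countable_imp_null_set_lborel) simp
    ultimately show ?thesis unfolding T'_def by (intro null_sets.Un)
  qed
  have T'b[measurable]: "T' \<in> sets borel" using T'n by (simp add: null_sets_def)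
  have "emeasure (lborel::'a measure) {u. norm u \<in> T'} = 0"
    using T'n by (intro norm_preimage_null T'b) (simp add: null_sets_def)
  moreover have "{u::'a. norm u \<in> T'} \<in> sets lborel" by measurable
  ultimately have "{u::'a. norm u \<in> T'} \<in> null_sets lborel" by (simp add: null_sets_def)
  then have "AE u in lborel. u \<notin> {u::'a. norm u \<in> T'}" by (rule AE_not_in)
  then have "AE u in lborel. ennreal (\<rho> u) = 0"
  proof eventually_elim
    case (elim u)
    then have "norm u \<notin> T" "norm u \<notin> T3" "norm u > 0" by (auto simp: T'_def)
    then have "\<rho> u \<le> 0" using rep[of u] Pz[of "norm u"] by simp
    then show ?case by (simp add: ennreal_eq_0_iff)
  qed
  then have "(\<integral>\<^sup>+u. ennreal (\<rho> u) \<partial>lborel) = (\<integral>\<^sup>+(u::'a). 0 \<partial>lborel)"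
    by (intro nn_integral_cong_AE) auto
  with nz show False by simp
qed




lemma kernel_ray:
  fixes P :: "real \<Rightarrow> real" and \<alpha> \<beta> t :: real
  assumes Pm[measurable]: "P \<in> borel_measurable borel" and t: "0 < t" and N: "1 \<le> N"
  shows "(\<integral>\<^sup>+l. indicator {\<alpha>..\<beta>} l * ennreal (l^(N-1) * P (l * t)) \<partial>lborel)
       = ennreal (1 / t^N) * (\<integral>\<^sup>+s. indicator {\<alpha>*t..\<beta>*t} s * ennreal (s^(N-1) * P s) \<partial>lborel)"
proof -
  have "(\<integral>\<^sup>+s. indicator {\<alpha>*t..\<beta>*t} s * ennreal (s^(N-1) * P s) \<partial>lborel)
      = \<bar>t\<bar> * (\<integral>\<^sup>+l. indicator {\<alpha>*t..\<beta>*t} (0 + t * l) * ennreal ((0 + t * l)^(N-1) * P (0 + t * l)) \<partial>lborel)"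
    by (rule nn_integral_real_affine) (use t in auto)
  also have "(\<integral>\<^sup>+l. indicator {\<alpha>*t..\<beta>*t} (0 + t * l) * ennreal ((0 + t * l)^(N-1) * P (0 + t * l)) \<partial>lborel)
      = (\<integral>\<^sup>+l. ennreal (t^(N-1)) * (indicator {\<alpha>..\<beta>} l * ennreal (l^(N-1) * P (l * t))) \<partial>lborel)"
  proof (intro nn_integral_cong)
    fix l :: real
    have ind: "indicator {\<alpha>*t..\<beta>*t} (t * l) = (indicator {\<alpha>..\<beta>} l :: ennreal)"
      using t by (simp add: indicator_def mult.commute)
    have "ennreal ((t * l)^(N-1) * P (t * l)) = ennreal (t^(N-1)) * ennreal (l^(N-1) * P (l * t))"
      using t by (subst ennreal_mult'[symmetric]) (auto simp: power_mult_distrib mult.commute mult.left_commute)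
    then show "indicator {\<alpha>*t..\<beta>*t} (0 + t * l) * ennreal ((0 + t * l)^(N-1) * P (0 + t * l))
        = ennreal (t^(N-1)) * (indicator {\<alpha>..\<beta>} l * ennreal (l^(N-1) * P (l * t)))"
      using ind by (simp add: mult_ac)
  qed
  also have "\<dots> = ennreal (t^(N-1)) * (\<integral>\<^sup>+l. indicator {\<alpha>..\<beta>} l * ennreal (l^(N-1) * P (l * t)) \<partial>lborel)"
    by (rule nn_integral_cmult) measurable
  finally have eq: "(\<integral>\<^sup>+s. indicator {\<alpha>*t..\<beta>*t} s * ennreal (s^(N-1) * P s) \<partial>lborel)
     = ennreal (t^N) * (\<integral>\<^sup>+l. indicator {\<alpha>..\<beta>} l * ennreal (l^(N-1) * P (l * t)) \<partial>lborel)"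
  proof -
    assume a: "(\<integral>\<^sup>+s. indicator {\<alpha>*t..\<beta>*t} s * ennreal (s^(N-1) * P s) \<partial>lborel)
      = ennreal \<bar>t\<bar> * (ennreal (t^(N-1)) * (\<integral>\<^sup>+l. indicator {\<alpha>..\<beta>} l * ennreal (l^(N-1) * P (l * t)) \<partial>lborel))"
    have "ennreal \<bar>t\<bar> * ennreal (t^(N-1)) = ennreal (t^N)"
      using t N by (subst ennreal_mult[symmetric]) (auto simp: power_eq_if[of t N])
    then show ?thesis using a by (simp add: mult.assoc[symmetric])
  qed
  have tN: "t^N > 0" using t by simp
  have one: "ennreal (1 / t^N) * ennreal (t^N) = 1"
    using tN by (subst ennreal_mult[symmetric]) (auto simp del: power_eq_0_iff)
  show ?thesis unfolding eq by (simp add: mult.assoc[symmetric] one)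
qed




lemma rescale_inv: "0 < l \<Longrightarrow> rescale \<rho> (1/l) h = l ^ DIM('a) * \<rho> (l *\<^sub>R (h::'a::euclidean_space))"
  unfolding rescale_def by simp

lemma mu_radial:
  fixes \<rho> :: "'a::euclidean_space \<Rightarrow> real"
  assumes Pm[measurable]: "P \<in> borel_measurable borel" and Tm[measurable]: "T \<in> sets borel"
    and T0: "emeasure lborel T = 0"
    and rep: "\<And>u. norm u \<notin> T \<Longrightarrow> \<rho> u = P (norm u)"
    and l: "0 < l"
  shows "(\<integral>\<^sup>+h. ennreal (rescale \<rho> (1/l) h) * g h \<partial>lebesgue)
       = (\<integral>\<^sup>+h. ennreal (l ^ DIM('a) * P (l * norm h)) * g h \<partial>lborel)"
proof -
  define Tl where "Tl = {t::real. l *\<^sub>R t \<in> T}"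
  have Tlm[measurable]: "Tl \<in> sets borel" unfolding Tl_def by measurable
  have "emeasure lborel Tl = 0"
    unfolding Tl_def using emeasure_lborel_scale_preimage[of l T] l T0 by simp
  then have "emeasure (lborel::'a measure) {h. norm h \<in> Tl} = 0"
    by (intro norm_preimage_null Tlm)
  moreover have "{h::'a. norm h \<in> Tl} \<in> sets lborel" by measurable
  ultimately have "{h::'a. norm h \<in> Tl} \<in> null_sets lborel" by (simp add: null_sets_def)
  then have ae: "AE h in lborel. h \<notin> {h::'a. norm h \<in> Tl}" by (rule AE_not_in)
  have "(\<integral>\<^sup>+h. ennreal (rescale \<rho> (1/l) h) * g h \<partial>lebesgue)
       = (\<integral>\<^sup>+h. ennreal (rescale \<rho> (1/l) h) * g h \<partial>lborel)"
    by (rule nn_integral_completion)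
  also have "\<dots> = (\<integral>\<^sup>+h. ennreal (l ^ DIM('a) * P (l * norm h)) * g h \<partial>lborel)"
    using ae
  proof (intro nn_integral_cong_AE, eventually_elim)
    case (elim h)
    then have "norm (l *\<^sub>R h) \<notin> T" using l unfolding Tl_def by simp
    then have "\<rho> (l *\<^sub>R h) = P (l * norm h)" using rep l by simp
    then show ?case using l by (simp add: rescale_inv)
  qed
  finally show ?thesis .
qed

lemma avg_lower:
  fixes \<rho> :: "'a::euclidean_space \<Rightarrow> real"
  assumes Pm[measurable]: "P \<in> borel_measurable borel" and Tm[measurable]: "T \<in> sets borel"
    and T0: "emeasure lborel T = 0"
    and rep: "\<And>u. norm u \<notin> T \<Longrightarrow> \<rho> u = P (norm u)"
    and Em[measurable]: "E \<in> sets borel" and \<alpha>: "0 < \<alpha>" "\<alpha> \<le> \<beta>" and r0: "0 < r0" "r0 \<le> R0"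
  shows "(\<integral>\<^sup>+s. indicator {r0..R0} s * ennreal (s^(DIM('a)-1) * P s) \<partial>lborel) *
           (\<integral>\<^sup>+h. indicator E h * indicator {h. R0/\<beta> \<le> norm h \<and> norm h \<le> r0/\<alpha>} h * ennreal (1 / norm h ^ DIM('a)) \<partial>lborel)
       \<le> (\<integral>\<^sup>+l. indicator {\<alpha>..\<beta>} l * ennreal (1/l) *
              (\<integral>\<^sup>+h. ennreal (rescale \<rho> (1/l) h) * indicator E h \<partial>lebesgue) \<partial>lborel)"
proof -
  define N where "N = DIM('a)"
  have N: "1 \<le> N" unfolding N_def by (simp add: DIM_positive Suc_le_eq)
  define J0 where "J0 = (\<integral>\<^sup>+s. indicator {r0..R0} s * ennreal (s^(DIM('a)-1) * P s) \<partial>lborel)"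
  define A where "A = {h::'a. R0/\<beta> \<le> norm h \<and> norm h \<le> r0/\<alpha>}"
  have Am[measurable]: "A \<in> sets borel" unfolding A_def by measurable
  define f where "f = (\<lambda>(l::real) (h::'a). indicator {\<alpha>..\<beta>} l * ennreal (l^(N-1) * P (l * norm h)) * indicator E h :: ennreal)"
  have fm: "case_prod f \<in> borel_measurable (lborel \<Otimes>\<^sub>M lborel)" unfolding f_def by measurable
  have step1: "indicator {\<alpha>..\<beta>} l * ennreal (1/l) *
              (\<integral>\<^sup>+h. ennreal (rescale \<rho> (1/l) h) * indicator E h \<partial>lebesgue) = (\<integral>\<^sup>+h. f l h \<partial>lborel)" for l
  proof (cases "l \<in> {\<alpha>..\<beta>}")
    case True
    then have l: "0 < l" using \<alpha> by auto
    have "indicator {\<alpha>..\<beta>} l * ennreal (1/l) *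
              (\<integral>\<^sup>+h. ennreal (rescale \<rho> (1/l) h) * indicator E h \<partial>lebesgue)
        = ennreal (1/l) * (\<integral>\<^sup>+h. ennreal (l ^ DIM('a) * P (l * norm h)) * indicator E h \<partial>lborel)"
      using True mu_radial[OF Pm Tm T0 rep l, of "indicator E"] by simp
    also have "\<dots> = (\<integral>\<^sup>+h. ennreal (1/l) * (ennreal (l ^ DIM('a) * P (l * norm h)) * indicator E h) \<partial>lborel)"
      by (rule nn_integral_cmult[symmetric]) measurable
    also have "\<dots> = (\<integral>\<^sup>+h. f l h \<partial>lborel)"
    proof (intro nn_integral_cong)
      fix h :: 'a
      have "ennreal (1/l) * ennreal (l ^ DIM('a) * P (l * norm h)) = ennreal (1/l * (l ^ DIM('a) * P (l * norm h)))"
        using l by (subst ennreal_mult') auto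
      also have "1/l * (l ^ DIM('a) * P (l * norm h)) = l^(N-1) * P (l * norm h)"
        using l N unfolding N_def by (simp add: power_eq_if[of l "DIM('a)"] field_simps)
      finally show "ennreal (1/l) * (ennreal (l ^ DIM('a) * P (l * norm h)) * indicator E h) = f l h"
        unfolding f_def using True by (simp add: mult.assoc[symmetric])
    qed
    finally show ?thesis .
  next
    case False then show ?thesis unfolding f_def by simp
  qed
  have step2: "ennreal (1 / norm h ^ N) * J0 * indicator (E \<inter> A) h \<le> (\<integral>\<^sup>+l. f l h \<partial>lborel)" for h
  proof (cases "h \<in> E \<inter> A")
    case True
    let ?t = "norm h"
    have R0p: "0 < R0" using r0 by simp
    have bpos: "0 < \<beta>" using \<alpha> by simp
    have tpos: "0 < ?t"
    proof -
      have "0 < R0/\<beta>" using R0p bpos by simp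
      then show ?thesis using True unfolding A_def by auto
    qed
    have t1: "\<alpha> * ?t \<le> r0" using True \<alpha> unfolding A_def by (simp add: field_simps)
    have t2: "R0 \<le> \<beta> * ?t" using True bpos unfolding A_def by (simp add: field_simps)
    have "J0 \<le> (\<integral>\<^sup>+s. indicator {\<alpha>*?t..\<beta>*?t} s * ennreal (s^(N-1) * P s) \<partial>lborel)"
      unfolding J0_def N_def using t1 t2
      by (intro nn_integral_mono mult_right_mono) (auto simp: indicator_def)
    then have "ennreal (1 / ?t ^ N) * J0 \<le> ennreal (1 / ?t ^ N) * (\<integral>\<^sup>+s. indicator {\<alpha>*?t..\<beta>*?t} s * ennreal (s^(N-1) * P s) \<partial>lborel)"
      by (rule mult_left_mono) simp
    also have "\<dots> = (\<integral>\<^sup>+l. indicator {\<alpha>..\<beta>} l * ennreal (l^(N-1) * P (l * ?t)) \<partial>lborel)"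
      by (rule kernel_ray[symmetric, OF Pm tpos N])
    also have "\<dots> = (\<integral>\<^sup>+l. f l h \<partial>lborel)"
      unfolding f_def using True by (intro nn_integral_cong) simp
    finally show ?thesis using True by simp
  next
    case False then show ?thesis by simp
  qed
  have "J0 * (\<integral>\<^sup>+h. indicator E h * indicator A h * ennreal (1 / norm h ^ DIM('a)) \<partial>lborel)
      = (\<integral>\<^sup>+h. J0 * (indicator E h * indicator A h * ennreal (1 / norm h ^ DIM('a))) \<partial>lborel)"
    by (rule nn_integral_cmult[symmetric]) measurable
  also have "\<dots> = (\<integral>\<^sup>+h. ennreal (1 / norm h ^ N) * J0 * indicator (E \<inter> A) h \<partial>lborel)"
    unfolding N_def by (intro nn_integral_cong) (simp add: indicator_inter_arith mult_ac)
  also have "\<dots> \<le> (\<integral>\<^sup>+h. (\<integral>\<^sup>+l. f l h \<partial>lborel) \<partial>lborel)"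
    by (intro nn_integral_mono step2)
  also have "\<dots> = (\<integral>\<^sup>+l. (\<integral>\<^sup>+h. f l h \<partial>lborel) \<partial>lborel)"
    by (rule lborel_pair.Fubini'[OF fm])
  also have "\<dots> = (\<integral>\<^sup>+l. indicator {\<alpha>..\<beta>} l * ennreal (1/l) *
              (\<integral>\<^sup>+h. ennreal (rescale \<rho> (1/l) h) * indicator E h \<partial>lebesgue) \<partial>lborel)"
    by (intro nn_integral_cong step1[symmetric])
  finally show ?thesis unfolding J0_def A_def .
qed




lemma ball_norm_bounds:
  fixes q h :: "'a::euclidean_space"
  assumes "h \<in> ball (q /\<^sub>R 2) (norm q / 8)"
  shows "3/8 * norm q \<le> norm h" "norm h \<le> 5/8 * norm q"
proof -
  have d: "norm (h - q /\<^sub>R 2) < norm q / 8" using assms by (simp add: dist_norm norm_minus_commute)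
  have "norm (q /\<^sub>R 2) \<le> norm h + norm (h - q /\<^sub>R 2)" by (metis norm_triangle_sub add.commute norm_minus_commute)
  then show "3/8 * norm q \<le> norm h" using d by simp
  have "norm h \<le> norm (q /\<^sub>R 2) + norm (h - q /\<^sub>R 2)" by (rule norm_triangle_sub)
  then show "norm h \<le> 5/8 * norm q" using d by simp
qed

lemma unit_ball_vol:
  obtains v where "v > 0" "emeasure lebesgue (ball (0::'a::euclidean_space) 1) = ennreal v"
proof -
  have a: "emeasure lborel (ball (0::'a) 1) = ennreal (measure lborel (ball (0::'a) 1))"
    using emeasure_lborel_ball_finite[of "0::'a" 1] by (intro emeasure_eq_ennreal_measure) auto
  have b: "measure lborel (ball (0::'a) 1) > 0" using content_ball_pos[of 1 "0::'a"] by simp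
  have c: "emeasure lebesgue (ball (0::'a) 1) = emeasure lborel (ball (0::'a) 1)"
    by (rule emeasure_lebesgue_borel) simp
  show ?thesis using that[OF b] a c by simp
qed

lemma one_ball_lower:
  fixes f :: "'a::euclidean_space \<Rightarrow> real"
  assumes f[measurable]: "f \<in> borel_measurable lebesgue" and G: "0 \<le> G"
    and vb: "ennreal (5/4 * G * norm q) < DD f q" and q: "q \<noteq> 0"
    and v: "emeasure lebesgue (ball (0::'a) 1) = ennreal v" "v > 0"
  shows "ennreal (v / (2 * 5 ^ DIM('a))) \<le>
    (\<integral>\<^sup>+h. ennreal (1 / norm h ^ DIM('a)) * indicator (Bad f G \<inter> ball (q /\<^sub>R 2) (norm q / 8)) h \<partial>lborel)"
proof -
  let ?N = "DIM('a)"
  let ?B = "ball (q /\<^sub>R 2) (norm q / 8)"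
  have Em[measurable]: "Bad f G \<in> sets borel" unfolding Bad_def using bad_set_borel[OF f] by simp
  have nq: "norm q > 0" using q by simp
  have half: "emeasure lebesgue ?B \<le> 2 * emeasure lebesgue (?B \<inter> Bad f G)"
    by (rule very_bad_half[OF f G vb])
  have Bm: "emeasure lebesgue ?B = ennreal ((norm q / 8) ^ ?N * v)"
    using emeasure_lebesgue_ball_conv_unit_ball[of "norm q / 8" "q /\<^sub>R 2"] v
    by (simp add: ennreal_mult[symmetric])
  have EB: "emeasure lebesgue (?B \<inter> Bad f G) = emeasure lborel (Bad f G \<inter> ?B)"
    by (subst emeasure_lebesgue_borel) (auto simp: Int_commute)
  have f1: "(\<integral>\<^sup>+h. ennreal ((8 / (5 * norm q)) ^ ?N) * indicator (Bad f G \<inter> ?B) h \<partial>lborel)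
      \<le> (\<integral>\<^sup>+h. ennreal (1 / norm h ^ ?N) * indicator (Bad f G \<inter> ?B) h \<partial>lborel)"
  proof (intro nn_integral_mono)
    fix h
    show "ennreal ((8 / (5 * norm q)) ^ ?N) * indicator (Bad f G \<inter> ?B) h
        \<le> ennreal (1 / norm h ^ ?N) * indicator (Bad f G \<inter> ?B) h"
    proof (cases "h \<in> ?B")
      case True
      note bb = ball_norm_bounds[OF True]
      have hp: "norm h > 0" using bb(1) nq by linarith
      have "8 / (5 * norm q) \<le> 1 / norm h" using bb(2) hp nq by (simp add: field_simps)
      then have "(8 / (5 * norm q)) ^ ?N \<le> (1 / norm h) ^ ?N" by (rule power_mono) (use nq in simp)
      then show ?thesis by (intro mult_right_mono ennreal_leI) (auto simp: power_one_over)
    qed simp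
  qed
  have f2: "(\<integral>\<^sup>+h. ennreal ((8 / (5 * norm q)) ^ ?N) * indicator (Bad f G \<inter> ?B) h \<partial>lborel)
      = ennreal ((8 / (5 * norm q)) ^ ?N) * emeasure lborel (Bad f G \<inter> ?B)"
    by (simp add: nn_integral_cmult_indicator)
  have f3: "ennreal (v / (2 * 5 ^ ?N)) \<le> ennreal ((8 / (5 * norm q)) ^ ?N) * emeasure lborel (Bad f G \<inter> ?B)"
  proof -
    define w where "w = (norm q / 8) ^ ?N * v"
    have w0: "w \<ge> 0" unfolding w_def using v by simp
    have m: "ennreal (w / 2) \<le> emeasure lborel (Bad f G \<inter> ?B)"
    proof -
      have le: "ennreal w \<le> 2 * emeasure lborel (Bad f G \<inter> ?B)"
        using half Bm EB unfolding w_def by simp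
      show ?thesis
      proof (cases "emeasure lborel (Bad f G \<inter> ?B)" rule: ennreal_cases)
        case (real m')
        then have "ennreal w \<le> ennreal (2 * m')" using le by (simp add: ennreal_mult)
        then have "w \<le> 2 * m'" using real(1) by (simp add: ennreal_le_iff)
        then show ?thesis using real by (simp add: ennreal_leI)
      qed simp
    qed
    have prod: "(8 / (5 * norm q)) ^ ?N * (w / 2) = v / (2 * 5 ^ ?N)"
    proof -
      have "(8 / (5 * norm q)) * (norm q / 8) = 1 / 5" using nq by simp
      then have "(8 / (5 * norm q)) ^ ?N * (norm q / 8) ^ ?N = (1/5) ^ ?N"
        by (metis power_mult_distrib)
      then show ?thesis unfolding w_def using q by (simp add: power_one_over field_simps)
    qed
    have "ennreal (v / (2 * 5 ^ ?N)) = ennreal ((8 / (5 * norm q)) ^ ?N) * ennreal (w / 2)"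
      using prod nq by (subst ennreal_mult[symmetric]) (auto simp: w0 mult.commute)
    also have "\<dots> \<le> ennreal ((8 / (5 * norm q)) ^ ?N) * emeasure lborel (Bad f G \<inter> ?B)"
      by (rule mult_left_mono[OF m]) simp
    finally show ?thesis .
  qed
  show ?thesis using order_trans[OF f3[folded f2] f1] .
qed




lemma balls_lower:
  fixes f :: "'a::euclidean_space \<Rightarrow> real"
  assumes f[measurable]: "f \<in> borel_measurable lebesgue" and G: "0 \<le> G"
    and vb0: "ennreal (5/4 * G * norm p) < DD f p" and p: "p \<noteq> 0"
    and v: "emeasure lebesgue (ball (0::'a) 1) = ennreal v" "v > 0"
    and a: "a \<le> 3/8 * norm p / 2^n" and b: "5/8 * norm p \<le> b"
  shows "ennreal (real (n+1) * (v / (2 * 5 ^ DIM('a)))) \<le>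
    (\<integral>\<^sup>+h. indicator (Bad f G) h * indicator {h. a \<le> norm h \<and> norm h \<le> b} h * ennreal (1 / norm h ^ DIM('a)) \<partial>lborel)"
proof -
  let ?N = "DIM('a)"
  define q where "q k = p /\<^sub>R 2^k" for k :: nat
  have nq: "norm (q k) = norm p / 2^k" for k unfolding q_def by (simp add: divide_inverse mult.commute)
  have qnz: "q k \<noteq> 0" for k unfolding q_def using p by simp
  have vb: "ennreal (5/4 * G * norm (q k)) < DD f (q k)" for k
  proof (induction k)
    case 0 then show ?case using vb0 by (simp add: q_def)
  next
    case (Suc k)
    have "q (Suc k) = q k /\<^sub>R 2" unfolding q_def by simp
    then show ?case using very_bad_half_step[OF f G _, of "5/4 * G" "q k"] Suc G
      by (simp add: mult.assoc)
  qed
  define S where "S k = Bad f G \<inter> ball (q k /\<^sub>R 2) (norm (q k) / 8)" for k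
  have Em[measurable]: "Bad f G \<in> sets borel" unfolding Bad_def using bad_set_borel[OF f] by simp
  have Sm[measurable]: "S k \<in> sets borel" for k unfolding S_def by measurable
  define M' where "M' = density lborel (\<lambda>h::'a. ennreal (1 / norm h ^ ?N))"
  have eM: "emeasure M' X = (\<integral>\<^sup>+h. ennreal (1 / norm h ^ ?N) * indicator X h \<partial>lborel)"
    if "X \<in> sets borel" for X
    unfolding M'_def using that by (subst emeasure_density) auto
  have one: "ennreal (v / (2 * 5 ^ ?N)) \<le> emeasure M' (S k)" for k
  proof -
    have e: "emeasure M' (S k) = (\<integral>\<^sup>+h. ennreal (1 / norm h ^ ?N) * indicator (S k) h \<partial>lborel)"
      by (rule eM[OF Sm])
    have "ennreal (v / (2 * 5 ^ ?N)) \<le> (\<integral>\<^sup>+h. ennreal (1 / norm h ^ ?N) * indicator (S k) h \<partial>lborel)"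
      unfolding S_def by (rule one_ball_lower[OF f G vb[of k] qnz v])
    then show ?thesis by (simp only: e)
  qed
  have disj: "disjoint_family_on S {..n}"
  proof (unfold disjoint_family_on_def, intro ballI impI)
    fix i j assume ij: "i \<in> {..n}" "j \<in> {..n}" "i \<noteq> j"
    have key: "S k \<inter> S l = {}" if kl: "k < l" for k l
    proof (rule ccontr)
      assume "S k \<inter> S l \<noteq> {}"
      then obtain h where h: "h \<in> ball (q k /\<^sub>R 2) (norm (q k) / 8)" "h \<in> ball (q l /\<^sub>R 2) (norm (q l) / 8)"
        unfolding S_def by auto
      have h1: "3/8 * (norm p / 2^k) \<le> norm h" using ball_norm_bounds(1)[OF h(1)] nq by simp
      have h2: "norm h \<le> 5/8 * (norm p / 2^l)" using ball_norm_bounds(2)[OF h(2)] nq by simp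
      have "(2::real)^k * 2 \<le> 2^l" using kl by (metis power_Suc mult.commute power_increasing Suc_leI one_le_numeral)
      then have "norm p / 2^l \<le> norm p / (2^k * 2)" by (intro divide_left_mono) auto
      then have "5/8 * (norm p / 2^l) \<le> 5/8 * (norm p / (2^k * 2))" by simp
      moreover have "5/8 * (norm p / (2^k * 2)) < 3/8 * (norm p / 2^k)" using p by (simp add: field_simps)
      ultimately show False using h1 h2 by linarith
    qed
    show "S i \<inter> S j = {}"
    proof (cases "i < j")
      case True then show ?thesis by (rule key)
    next
      case False then have "j < i" using ij by simp
      then show ?thesis using key by blast
    qed
  qed
  have sub: "(\<Union>k\<in>{..n}. S k) \<subseteq> Bad f G \<inter> {h. a \<le> norm h \<and> norm h \<le> b}"
  proof
    fix h assume "h \<in> (\<Union>k\<in>{..n}. S k)"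
    then obtain k where k: "k \<le> n" "h \<in> S k" by auto
    then have hb: "h \<in> ball (q k /\<^sub>R 2) (norm (q k) / 8)" "h \<in> Bad f G" unfolding S_def by auto
    have h1: "3/8 * (norm p / 2^k) \<le> norm h" using ball_norm_bounds(1)[OF hb(1)] nq by simp
    have h2: "norm h \<le> 5/8 * (norm p / 2^k)" using ball_norm_bounds(2)[OF hb(1)] nq by simp
    have "(2::real)^k \<le> 2^n" using k(1) by (rule power_increasing) simp
    then have "norm p / 2^n \<le> norm p / 2^k" by (intro divide_left_mono) auto
    then have "a \<le> norm h" using a h1 by linarith
    moreover have "norm p / 2^k \<le> norm p" by (simp add: divide_le_eq mult_le_cancel_left1)
    then have "norm h \<le> b" using b h2 by linarith
    ultimately show "h \<in> Bad f G \<inter> {h. a \<le> norm h \<and> norm h \<le> b}" using hb by simp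
  qed
  have "ennreal (real (n+1) * (v / (2 * 5 ^ ?N))) = ennreal (real (n+1)) * ennreal (v / (2 * 5 ^ ?N))"
    using v by (intro ennreal_mult) auto
  also have "\<dots> = of_nat (n+1) * ennreal (v / (2 * 5 ^ ?N))"
    by (simp only: ennreal_of_nat_eq_real_of_nat)
  also have "\<dots> = (\<Sum>k\<in>{..n}. ennreal (v / (2 * 5 ^ ?N)))" by simp
  also have "\<dots> \<le> (\<Sum>k\<in>{..n}. emeasure M' (S k))" by (intro sum_mono one)
  also have "\<dots> = emeasure M' (\<Union>k\<in>{..n}. S k)"
    by (rule sum_emeasure) (use disj in \<open>auto simp: M'_def\<close>)
  also have "\<dots> \<le> emeasure M' (Bad f G \<inter> {h. a \<le> norm h \<and> norm h \<le> b})"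
    by (rule emeasure_mono[OF sub]) (simp add: M'_def)
  also have "\<dots> = (\<integral>\<^sup>+h. indicator (Bad f G) h * indicator {h. a \<le> norm h \<and> norm h \<le> b} h * ennreal (1 / norm h ^ ?N) \<partial>lborel)"
    by (subst eM) (auto intro!: nn_integral_cong simp: indicator_inter_arith mult_ac)
  finally show ?thesis .
qed




lemma omega_ext_mono:
  assumes mono: "mono_on {0..} \<omega>" and xy: "x \<le> y"
  shows "omega_ext \<omega> x \<le> omega_ext \<omega> y"
proof (cases "y = \<infinity>")
  case True then show ?thesis by (simp add: omega_ext_def)
next
  case False
  have xf: "x \<noteq> \<infinity>"
  proof
    assume "x = \<infinity>" then show False using xy False by (simp add: top_unique)
  qed
  have le: "enn2real x \<le> enn2real y" using xy False by (simp add: enn2real_mono top.not_eq_extremum)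
  have "\<omega> (enn2real x) \<le> \<omega> (enn2real y)"
    by (rule mono_onD[OF mono]) (use le in auto)
  then show ?thesis using xf False by (simp add: omega_ext_def ennreal_leI)
qed

lemma omega_ext_ge:
  fixes f :: "'a::euclidean_space \<Rightarrow> real"
  assumes mono: "mono_on {0..} \<omega>" and G: "0 \<le> G"
    and f[measurable]: "f \<in> borel_measurable lebesgue"
    and h: "h \<in> Bad f G"
  shows "ennreal (\<omega> G) \<le> omega_ext \<omega> (Linf_norm (\<lambda>x. f (x + h) - f x) / ennreal (norm h))"
proof -
  have lt: "ennreal (G * norm h) < DD f h" using h by (simp add: Bad_def)
  have hnz: "h \<noteq> 0"
  proof
    assume "h = 0" then show False using lt DD_zero[OF f] by simp
  qed
  let ?x = "DD f h / ennreal (norm h)"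
  have ge: "ennreal G \<le> ?x"
  proof (rule ccontr)
    assume "\<not> ennreal G \<le> ?x"
    then have "?x < ennreal G" by simp
    then have "DD f h < ennreal G * ennreal (norm h)"
      using hnz by (subst (asm) divide_less_ennreal) auto
    then show False using lt G by (simp add: ennreal_mult)
  qed
  have "ennreal (\<omega> G) = omega_ext \<omega> (ennreal G)" using G by (simp add: omega_ext_def)
  also have "\<dots> \<le> omega_ext \<omega> ?x" by (rule omega_ext_mono[OF mono ge])
  finally show ?thesis by (simp add: DD_def)
qed

lemma inv_integral_bound:
  assumes \<alpha>: "0 < \<alpha>"
  shows "(\<integral>\<^sup>+l. indicator {\<alpha>..\<alpha>*2^M} l * ennreal (1/l) \<partial>lborel) \<le> of_nat M"
proof (induction M)
  case 0
  have "(\<integral>\<^sup>+l. indicator {\<alpha>..\<alpha>*2^0} l * ennreal (1/l) \<partial>lborel) \<le> (\<integral>\<^sup>+l. indicator {\<alpha>..\<alpha>} l * ennreal (1/\<alpha>) \<partial>lborel)"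
    by (intro nn_integral_mono) (auto simp: indicator_def)
  also have "\<dots> = 0" by (simp add: nn_integral_multc)
  finally show ?case by (simp add: add.commute)
next
  case (Suc M)
  have "(\<integral>\<^sup>+l. indicator {\<alpha>..\<alpha>*2^Suc M} l * ennreal (1/l) \<partial>lborel)
      \<le> (\<integral>\<^sup>+l. indicator {\<alpha>..\<alpha>*2^M} l * ennreal (1/l) + indicator {\<alpha>*2^M..\<alpha>*2^Suc M} l * ennreal (1/(\<alpha>*2^M)) \<partial>lborel)"
  proof (intro nn_integral_mono)
    fix l :: real
    show "indicator {\<alpha>..\<alpha>*2^Suc M} l * ennreal (1/l)
        \<le> indicator {\<alpha>..\<alpha>*2^M} l * ennreal (1/l) + indicator {\<alpha>*2^M..\<alpha>*2^Suc M} l * ennreal (1/(\<alpha>*2^M))"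
    proof (cases "l \<le> \<alpha>*2^M")
      case True then show ?thesis by (auto simp: indicator_def)
    next
      case False
      have p: "0 < \<alpha>*2^M" using \<alpha> by simp
      then have lp: "0 < l" using False by linarith
      have "1/l \<le> 1/(\<alpha>*2^M)" using False p lp by (intro divide_left_mono) auto
      then show ?thesis using False by (auto simp: indicator_def intro: ennreal_leI)
    qed
  qed
  also have "\<dots> = (\<integral>\<^sup>+l. indicator {\<alpha>..\<alpha>*2^M} l * ennreal (1/l) \<partial>lborel) +
      (\<integral>\<^sup>+l. indicator {\<alpha>*2^M..\<alpha>*2^Suc M} l * ennreal (1/(\<alpha>*2^M)) \<partial>lborel)"
    by (rule nn_integral_add) auto
  also have "(\<integral>\<^sup>+l. indicator {\<alpha>*2^M..\<alpha>*2^Suc M} l * ennreal (1/(\<alpha>*2^M)) \<partial>lborel) = 1"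
  proof -
    have "(\<integral>\<^sup>+l. indicator {\<alpha>*2^M..\<alpha>*2^Suc M} l * ennreal (1/(\<alpha>*2^M)) \<partial>lborel)
       = ennreal (\<alpha>*2^Suc M - \<alpha>*2^M) * ennreal (1/(\<alpha>*2^M))"
      using \<alpha> by (simp add: nn_integral_multc)
    also have "\<dots> = ennreal ((\<alpha>*2^Suc M - \<alpha>*2^M) * (1/(\<alpha>*2^M)))"
      using \<alpha> by (subst ennreal_mult) auto
    also have "(\<alpha>*2^Suc M - \<alpha>*2^M) * (1/(\<alpha>*2^M)) = 1" using \<alpha> by (simp add: field_simps)
    finally show ?thesis by simp
  qed
  also have "(\<integral>\<^sup>+l. indicator {\<alpha>..\<alpha>*2^M} l * ennreal (1/l) \<partial>lborel) + 1 \<le> of_nat M + 1"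
    using Suc.IH by (rule add_right_mono)
  finally show ?case by (simp add: add.commute)
qed




lemma vb_iter:
  fixes f :: "'a::euclidean_space \<Rightarrow> real"
  assumes f[measurable]: "f \<in> borel_measurable lebesgue" and G: "0 \<le> G"
    and vb0: "ennreal (5/4 * G * norm p) < DD f p"
  shows "ennreal (5/4 * G * norm (p /\<^sub>R 2^k)) < DD f (p /\<^sub>R 2^k)"
proof (induction k)
  case 0 then show ?case using vb0 by simp
next
  case (Suc k)
  have "p /\<^sub>R 2^Suc k = (p /\<^sub>R 2^k) /\<^sub>R 2" by simp
  then show ?case using very_bad_half_step[OF f G _, of "5/4 * G" "p /\<^sub>R 2^k"] Suc G
    by (simp add: mult.assoc)
qed

definition Fm :: "(real \<Rightarrow> real) \<Rightarrow> ('a::euclidean_space \<Rightarrow> real) \<Rightarrow> ('a \<Rightarrow> real) \<Rightarrow> real \<Rightarrow> ennreal" where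
  "Fm \<omega> \<rho> f \<epsilon> = (\<integral>\<^sup>+ h. ennreal (rescale \<rho> \<epsilon> h) *
        omega_ext \<omega> (Linf_norm (\<lambda>x. f (x + h) - f x) / ennreal (norm h)) \<partial>lebesgue)"

lemma mollified_Fm: "mollified_functional \<omega> \<rho> f = Limsup (at_right 0) (Fm \<omega> \<rho> f)"
  unfolding mollified_functional_def Fm_def[abs_def] ..

lemma rescale_measurable[measurable]:
  assumes [measurable]: "\<rho> \<in> borel_measurable lebesgue"
  shows "rescale \<rho> \<epsilon> \<in> borel_measurable lebesgue"
  unfolding rescale_def[abs_def] by measurable

lemma Fm_ge:
  fixes f \<rho> :: "'a::euclidean_space \<Rightarrow> real"
  assumes \<rho>m[measurable]: "\<rho> \<in> borel_measurable lebesgue" and mono: "mono_on {0..} \<omega>" and G: "0 \<le> G"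
    and f[measurable]: "f \<in> borel_measurable lebesgue"
  shows "ennreal (\<omega> G) * (\<integral>\<^sup>+h. ennreal (rescale \<rho> \<epsilon> h) * indicator (Bad f G) h \<partial>lebesgue) \<le> Fm \<omega> \<rho> f \<epsilon>"
proof -
  have Em[measurable]: "Bad f G \<in> sets borel" unfolding Bad_def using bad_set_borel[OF f] by simp
  have Eml[measurable]: "Bad f G \<in> sets lebesgue" using Em by simp
  have "ennreal (\<omega> G) * (\<integral>\<^sup>+h. ennreal (rescale \<rho> \<epsilon> h) * indicator (Bad f G) h \<partial>lebesgue)
      = (\<integral>\<^sup>+h. ennreal (\<omega> G) * (ennreal (rescale \<rho> \<epsilon> h) * indicator (Bad f G) h) \<partial>lebesgue)"
    by (rule nn_integral_cmult[symmetric]) measurable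
  also have "\<dots> \<le> Fm \<omega> \<rho> f \<epsilon>"
    unfolding Fm_def
  proof (intro nn_integral_mono)
    fix h :: 'a
    show "ennreal (\<omega> G) * (ennreal (rescale \<rho> \<epsilon> h) * indicator (Bad f G) h)
        \<le> ennreal (rescale \<rho> \<epsilon> h) * omega_ext \<omega> (Linf_norm (\<lambda>x. f (x + h) - f x) / ennreal (norm h))"
    proof (cases "h \<in> Bad f G")
      case True
      have "ennreal (\<omega> G) \<le> omega_ext \<omega> (Linf_norm (\<lambda>x. f (x + h) - f x) / ennreal (norm h))"
        by (rule omega_ext_ge[OF mono G f True])
      then have "ennreal (rescale \<rho> \<epsilon> h) * ennreal (\<omega> G) \<le> ennreal (rescale \<rho> \<epsilon> h) * omega_ext \<omega> (Linf_norm (\<lambda>x. f (x + h) - f x) / ennreal (norm h))"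
        by (rule mult_left_mono) simp
      then show ?thesis using True by (simp add: mult.commute)
    qed simp
  qed
  finally show ?thesis .
qed

lemma avg_integrand_measurable:
  fixes \<rho> :: "'a::euclidean_space \<Rightarrow> real"
  assumes Pm[measurable]: "P \<in> borel_measurable borel" and Tm[measurable]: "T \<in> sets borel"
    and T0: "emeasure lborel T = 0"
    and rep: "\<And>u. norm u \<notin> T \<Longrightarrow> \<rho> u = P (norm u)"
    and Em[measurable]: "E \<in> sets borel" and \<alpha>: "0 < \<alpha>"
  shows "(\<lambda>l. indicator {\<alpha>..\<beta>} l * ennreal (1/l) *
              (\<integral>\<^sup>+h. ennreal (rescale \<rho> (1/l) h) * indicator E h \<partial>lebesgue)) \<in> borel_measurable lborel"
proof -
  define N where "N = DIM('a)"
  have N: "1 \<le> N" unfolding N_def by (simp add: DIM_positive Suc_le_eq)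
  define f where "f = (\<lambda>(l::real) (h::'a). indicator {\<alpha>..\<beta>} l * ennreal (l^(N-1) * P (l * norm h)) * indicator E h :: ennreal)"
  have fm: "case_prod f \<in> borel_measurable (lborel \<Otimes>\<^sub>M lborel)" unfolding f_def by measurable
  have step1: "indicator {\<alpha>..\<beta>} l * ennreal (1/l) *
              (\<integral>\<^sup>+h. ennreal (rescale \<rho> (1/l) h) * indicator E h \<partial>lebesgue) = (\<integral>\<^sup>+h. f l h \<partial>lborel)" for l
  proof (cases "l \<in> {\<alpha>..\<beta>}")
    case True
    then have l: "0 < l" using \<alpha> by auto
    have "indicator {\<alpha>..\<beta>} l * ennreal (1/l) *
              (\<integral>\<^sup>+h. ennreal (rescale \<rho> (1/l) h) * indicator E h \<partial>lebesgue)
        = ennreal (1/l) * (\<integral>\<^sup>+h. ennreal (l ^ DIM('a) * P (l * norm h)) * indicator E h \<partial>lborel)"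
      using True mu_radial[OF Pm Tm T0 rep l, of "indicator E"] by simp
    also have "\<dots> = (\<integral>\<^sup>+h. ennreal (1/l) * (ennreal (l ^ DIM('a) * P (l * norm h)) * indicator E h) \<partial>lborel)"
      by (rule nn_integral_cmult[symmetric]) measurable
    also have "\<dots> = (\<integral>\<^sup>+h. f l h \<partial>lborel)"
    proof (intro nn_integral_cong)
      fix h :: 'a
      have "ennreal (1/l) * ennreal (l ^ DIM('a) * P (l * norm h)) = ennreal (1/l * (l ^ DIM('a) * P (l * norm h)))"
        using l by (subst ennreal_mult') auto
      also have "1/l * (l ^ DIM('a) * P (l * norm h)) = l^(N-1) * P (l * norm h)"
        using l N unfolding N_def by (simp add: power_eq_if[of l "DIM('a)"] field_simps)
      finally show "ennreal (1/l) * (ennreal (l ^ DIM('a) * P (l * norm h)) * indicator E h) = f l h"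
        unfolding f_def using True by (simp add: mult.assoc[symmetric])
    qed
    finally show ?thesis .
  next
    case False then show ?thesis unfolding f_def by simp
  qed
  have "(\<lambda>l. \<integral>\<^sup>+h. f l h \<partial>lborel) \<in> borel_measurable lborel"
    using lborel.borel_measurable_nn_integral[OF fm] by simp
  then show ?thesis by (subst step1) 
qed




lemma lower_bound_G:
  fixes \<rho> f :: "'a::euclidean_space \<Rightarrow> real"
  assumes \<rho>m[measurable]: "\<rho> \<in> borel_measurable lebesgue"
    and Pm[measurable]: "P \<in> borel_measurable borel" and Tm[measurable]: "T \<in> sets borel"
    and T0: "emeasure lborel T = 0"
    and rep: "\<And>u. norm u \<notin> T \<Longrightarrow> \<rho> u = P (norm u)"
    and r0: "0 < r0" "r0 \<le> R0"
    and j0: "0 < j0" "ennreal j0 \<le> (\<integral>\<^sup>+s. indicator {r0..R0} s * ennreal (s^(DIM('a)-1) * P s) \<partial>lborel)"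
    and v: "emeasure lebesgue (ball (0::'a) 1) = ennreal v" "0 < v"
    and mono: "mono_on {0..} \<omega>" and \<omega>nn: "\<And>t. 0 \<le> t \<Longrightarrow> 0 \<le> \<omega> t"
    and f[measurable]: "f \<in> borel_measurable lebesgue" and G: "0 \<le> G"
    and p: "p \<noteq> 0" and vb: "ennreal (5/4 * G * norm p) < DD f p"
  shows "ennreal (j0 * v / (4 * 5 ^ DIM('a)) * \<omega> G) \<le> mollified_functional \<omega> \<rho> f"
proof (rule ccontr)
  let ?N = "DIM('a)"
  define \<kappa> where "\<kappa> = j0 * v / (4 * 5 ^ ?N)"
  have \<kappa>: "0 < \<kappa>" unfolding \<kappa>_def using j0 v by simp
  define y where "y = ennreal (\<kappa> * \<omega> G)"
  assume "\<not> ?thesis"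
  then have lt: "Limsup (at_right 0) (Fm \<omega> \<rho> f) < y" unfolding y_def \<kappa>_def mollified_Fm by simp
  have \<omega>G: "0 < \<omega> G"
  proof -
    have "0 < y" using lt by (metis not_gr_zero not_less_zero)
    then have "0 < \<kappa> * \<omega> G" unfolding y_def by simp
    then show ?thesis using \<kappa> by (simp add: zero_less_mult_iff)
  qed
  have "eventually (\<lambda>\<epsilon>. Fm \<omega> \<rho> f \<epsilon> < y) (at_right 0)" using Limsup_lessD[OF lt] .
  then obtain b where b: "b > 0" "\<And>\<epsilon>. 0 < \<epsilon> \<Longrightarrow> \<epsilon> < b \<Longrightarrow> Fm \<omega> \<rho> f \<epsilon> < y"
    unfolding eventually_at_right_field by auto
  obtain m0 :: nat where m0: "5 * R0 / (3 * r0) < 2 ^ m0" using real_arch_pow[of 2] by auto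
  define lam0 where "lam0 = 2 / b"
  have lam0: "0 < lam0" unfolding lam0_def using b by simp
  obtain j :: nat where j: "norm p * 5 * lam0 / (8 * r0) < 2 ^ j" using real_arch_pow[of 2] by auto
  define p' where "p' = p /\<^sub>R 2^j"
  have p'nz: "p' \<noteq> 0" unfolding p'_def using p by simp
  have np': "norm p' = norm p / 2^j" unfolding p'_def by (simp add: divide_inverse mult.commute)
  have np'pos: "0 < norm p'" using p'nz by simp
  have vb': "ennreal (5/4 * G * norm p') < DD f p'" unfolding p'_def by (rule vb_iter[OF f G vb])
  define \<alpha> where "\<alpha> = 8 * r0 / (5 * norm p')"
  have \<alpha>pos: "0 < \<alpha>" unfolding \<alpha>_def using r0 np'pos by simp
  have alam: "lam0 < \<alpha>"
  proof -
    have "norm p * 5 * lam0 < 2 ^ j * (8 * r0)" using j r0 by (simp add: divide_less_eq)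
    then have "5 * norm p' * lam0 < 8 * r0" unfolding np' by (simp add: field_simps)
    then show ?thesis unfolding \<alpha>_def using np'pos by (simp add: field_simps)
  qed
  define X :: real where "X = 2 ^ m0"
  have Xpos: "0 < X" unfolding X_def by simp
  define M where "M = 2 * m0"
  define \<beta> where "\<beta> = \<alpha> * 2 ^ M"
  have \<beta>X: "\<beta> = \<alpha> * X * X" unfolding \<beta>_def M_def X_def by (simp only: mult_2 power_add mult.assoc)
  have \<alpha>\<beta>: "\<alpha> \<le> \<beta>" unfolding \<beta>_def using \<alpha>pos by simp
  define A where "A = {h::'a. R0/\<beta> \<le> norm h \<and> norm h \<le> r0/\<alpha>}"
  define LA where "LA = (\<integral>\<^sup>+h. indicator (Bad f G) h * indicator A h * ennreal (1 / norm h ^ ?N) \<partial>lborel)"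
  have Em[measurable]: "Bad f G \<in> sets borel" unfolding Bad_def using bad_set_borel[OF f] by simp
  have LA_ge: "ennreal (real (m0+1) * (v / (2 * 5 ^ ?N))) \<le> LA"
    unfolding LA_def A_def
  proof (rule balls_lower[OF f G vb' p'nz v])
    show "R0 / \<beta> \<le> 3/8 * norm p' / 2^m0"
    proof -
      have "5 * R0 < 3 * r0 * X" using m0 r0 unfolding X_def by (simp add: divide_less_eq mult.commute)
      then have "R0 \<le> 3/8 * norm p' * \<alpha> * X" unfolding \<alpha>_def using np'pos by (simp add: field_simps)
      then have "R0 / \<beta> \<le> (3/8 * norm p' * \<alpha> * X) / \<beta>"
        using \<alpha>pos Xpos unfolding \<beta>X by (intro divide_right_mono) auto
      also have "\<dots> = 3/8 * norm p' / X" unfolding \<beta>X using \<alpha>pos Xpos by (simp add: field_simps)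
      finally show ?thesis unfolding X_def .
    qed
    show "5/8 * norm p' \<le> r0 / \<alpha>" unfolding \<alpha>_def using r0 np'pos by (simp add: field_simps)
  qed
  define AVG where "AVG = (\<integral>\<^sup>+l. indicator {\<alpha>..\<beta>} l * ennreal (1/l) *
              (\<integral>\<^sup>+h. ennreal (rescale \<rho> (1/l) h) * indicator (Bad f G) h \<partial>lebesgue) \<partial>lborel)"
  have avg1: "(\<integral>\<^sup>+s. indicator {r0..R0} s * ennreal (s^(DIM('a)-1) * P s) \<partial>lborel) * LA \<le> AVG"
    unfolding LA_def A_def AVG_def by (rule avg_lower[OF Pm Tm T0 rep Em \<alpha>pos \<alpha>\<beta> r0])
  have meas: "(\<lambda>l. indicator {\<alpha>..\<beta>} l * ennreal (1/l) *
              (\<integral>\<^sup>+h. ennreal (rescale \<rho> (1/l) h) * indicator (Bad f G) h \<partial>lebesgue)) \<in> borel_measurable lborel"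
    by (rule avg_integrand_measurable[OF Pm Tm T0 rep Em \<alpha>pos])
  have avg2: "ennreal (\<omega> G) * AVG \<le> y * of_nat M"
  proof -
    have "ennreal (\<omega> G) * AVG = (\<integral>\<^sup>+l. ennreal (\<omega> G) * (indicator {\<alpha>..\<beta>} l * ennreal (1/l) *
              (\<integral>\<^sup>+h. ennreal (rescale \<rho> (1/l) h) * indicator (Bad f G) h \<partial>lebesgue)) \<partial>lborel)"
      unfolding AVG_def by (rule nn_integral_cmult[symmetric, OF meas])
    also have "\<dots> \<le> (\<integral>\<^sup>+l. indicator {\<alpha>..\<beta>} l * ennreal (1/l) * y \<partial>lborel)"
    proof (intro nn_integral_mono)
      fix l :: real
      show "ennreal (\<omega> G) * (indicator {\<alpha>..\<beta>} l * ennreal (1/l) *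
              (\<integral>\<^sup>+h. ennreal (rescale \<rho> (1/l) h) * indicator (Bad f G) h \<partial>lebesgue))
          \<le> indicator {\<alpha>..\<beta>} l * ennreal (1/l) * y"
      proof (cases "l \<in> {\<alpha>..\<beta>}")
        case True
        then have lpos: "0 < l" using \<alpha>pos by auto
        have "1/l < b"
        proof -
          have "lam0 < l" using True alam by auto
          then have "1/l < 1/lam0" using lam0 by (intro divide_strict_left_mono) auto
          also have "1/lam0 = b/2" unfolding lam0_def by simp
          finally show ?thesis using b by simp
        qed
        then have Fy: "Fm \<omega> \<rho> f (1/l) < y" using b lpos by simp
        have "ennreal (\<omega> G) * (\<integral>\<^sup>+h. ennreal (rescale \<rho> (1/l) h) * indicator (Bad f G) h \<partial>lebesgue)
            \<le> Fm \<omega> \<rho> f (1/l)" by (rule Fm_ge[OF \<rho>m mono G f])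
        then have le: "ennreal (\<omega> G) * (\<integral>\<^sup>+h. ennreal (rescale \<rho> (1/l) h) * indicator (Bad f G) h \<partial>lebesgue) \<le> y"
          using Fy by simp
        have "ennreal (\<omega> G) * (indicator {\<alpha>..\<beta>} l * ennreal (1/l) *
              (\<integral>\<^sup>+h. ennreal (rescale \<rho> (1/l) h) * indicator (Bad f G) h \<partial>lebesgue))
            = indicator {\<alpha>..\<beta>} l * ennreal (1/l) * (ennreal (\<omega> G) *
              (\<integral>\<^sup>+h. ennreal (rescale \<rho> (1/l) h) * indicator (Bad f G) h \<partial>lebesgue))"
          by (simp add: mult_ac)
        also have "\<dots> \<le> indicator {\<alpha>..\<beta>} l * ennreal (1/l) * y"
          by (rule mult_left_mono[OF le]) simp
        finally show ?thesis .
      qed simp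
    qed
    also have "\<dots> = (\<integral>\<^sup>+l. indicator {\<alpha>..\<alpha>*2^M} l * ennreal (1/l) \<partial>lborel) * y"
      unfolding \<beta>_def by (rule nn_integral_multc) measurable
    also have "\<dots> \<le> of_nat M * y"
      by (rule mult_right_mono[OF inv_integral_bound[OF \<alpha>pos]]) simp
    finally show ?thesis by (simp add: mult.commute)
  qed
  have "ennreal (\<omega> G) * (ennreal j0 * ennreal (real (m0+1) * (v / (2 * 5 ^ ?N))))
      \<le> ennreal (\<omega> G) * ((\<integral>\<^sup>+s. indicator {r0..R0} s * ennreal (s^(DIM('a)-1) * P s) \<partial>lborel) * LA)"
    by (intro mult_left_mono mult_mono j0(2) LA_ge) auto
  also have "\<dots> \<le> ennreal (\<omega> G) * AVG" by (rule mult_left_mono[OF avg1]) simp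
  also have "\<dots> \<le> y * of_nat M" by (rule avg2)
  finally have fin: "ennreal (\<omega> G) * (ennreal j0 * ennreal (real (m0+1) * (v / (2 * 5 ^ ?N)))) \<le> y * of_nat M" .
  have "ennreal (\<omega> G) * (ennreal j0 * ennreal (real (m0+1) * (v / (2 * 5 ^ ?N))))
      = ennreal (\<omega> G * (j0 * (real (m0+1) * (v / (2 * 5 ^ ?N)))))"
  proof -
    have c0: "0 \<le> real (m0+1) * (v / (2 * 5 ^ ?N))" using v by simp
    have "ennreal j0 * ennreal (real (m0+1) * (v / (2 * 5 ^ ?N))) = ennreal (j0 * (real (m0+1) * (v / (2 * 5 ^ ?N))))"
      by (rule ennreal_mult[symmetric]) (use j0 c0 in auto)
    moreover have "ennreal (\<omega> G) * ennreal (j0 * (real (m0+1) * (v / (2 * 5 ^ ?N)))) = ennreal (\<omega> G * (j0 * (real (m0+1) * (v / (2 * 5 ^ ?N)))))"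
      by (rule ennreal_mult[symmetric]) (use \<omega>G j0 c0 v in auto)
    ultimately show ?thesis by simp
  qed
  moreover have "y * of_nat M = ennreal (\<kappa> * \<omega> G * real M)"
    unfolding y_def using \<kappa> \<omega>G by (simp add: ennreal_mult ennreal_of_nat_eq_real_of_nat)
  ultimately have "\<omega> G * (j0 * (real (m0+1) * (v / (2 * 5 ^ ?N)))) \<le> \<kappa> * \<omega> G * real M"
    using fin \<kappa> \<omega>G by (simp add: ennreal_le_iff)
  then have ineq: "\<omega> G * (j0 * (real (m0+1) * (v / (2 * 5 ^ ?N)))) \<le> j0 * v / (4 * 5 ^ ?N) * \<omega> G * real (2 * m0)"
    unfolding \<kappa>_def M_def .
  define K where "K = \<omega> G * j0 * v / (2 * 5 ^ ?N)"
  have e1: "\<omega> G * (j0 * (real (m0+1) * (v / (2 * 5 ^ ?N)))) = K * real m0 + K"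
    unfolding K_def by (simp add: field_simps)
  have e2: "j0 * v / (4 * 5 ^ ?N) * \<omega> G * real (2 * m0) = K * real m0"
    unfolding K_def by (simp add: field_simps)
  have "0 < K" unfolding K_def using \<omega>G j0 v by simp
  then show False using ineq e1 e2 by linarith
qed




lemma rescale_integral_one:
  fixes \<rho> :: "'a::euclidean_space \<Rightarrow> real"
  assumes rm: "radial_mollifier \<rho>" and e: "0 < \<epsilon>"
  shows "(\<integral>\<^sup>+h. ennreal (rescale \<rho> \<epsilon> h) \<partial>lebesgue) = 1"
proof -
  have int: "integrable lebesgue \<rho>" and nn: "\<And>x. 0 \<le> \<rho> x" and one: "integral\<^sup>L lebesgue \<rho> = 1"
    using rm unfolding radial_mollifier_def by blast+
  have \<rho>m[measurable]: "\<rho> \<in> borel_measurable lebesgue" using int by (rule borel_measurable_integrable)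
  have I: "(\<integral>\<^sup>+u. ennreal (\<rho> u) \<partial>lebesgue) = 1"
    using nn_integral_eq_integral[OF int] nn one by simp
  have "(\<integral>\<^sup>+h. ennreal (rescale \<rho> \<epsilon> h) \<partial>lebesgue)
      = ennreal (\<bar>\<epsilon>\<bar>^DIM('a)) * (\<integral>\<^sup>+u. ennreal (rescale \<rho> \<epsilon> (0 + \<epsilon> *\<^sub>R u)) \<partial>lebesgue)"
    by (rule nn_integral_lebesgue_affine) (use e in auto)
  also have "(\<integral>\<^sup>+u. ennreal (rescale \<rho> \<epsilon> (0 + \<epsilon> *\<^sub>R u)) \<partial>lebesgue)
      = (\<integral>\<^sup>+u. ennreal ((1/\<epsilon>)^DIM('a)) * ennreal (\<rho> u) \<partial>lebesgue)"
    using e by (intro nn_integral_cong) (simp add: rescale_def ennreal_mult')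
  also have "\<dots> = ennreal ((1/\<epsilon>)^DIM('a)) * (\<integral>\<^sup>+u. ennreal (\<rho> u) \<partial>lebesgue)"
    by (rule nn_integral_cmult) measurable
  also have "ennreal (\<bar>\<epsilon>\<bar>^DIM('a)) * (ennreal ((1/\<epsilon>)^DIM('a)) * (\<integral>\<^sup>+u. ennreal (\<rho> u) \<partial>lebesgue)) = 1"
  proof -
    have "ennreal (\<bar>\<epsilon>\<bar>^DIM('a)) * ennreal ((1/\<epsilon>)^DIM('a)) = ennreal (\<bar>\<epsilon>\<bar>^DIM('a) * (1/\<epsilon>)^DIM('a))"
      by (rule ennreal_mult[symmetric]) (use e in auto)
    also have "\<bar>\<epsilon>\<bar>^DIM('a) * (1/\<epsilon>)^DIM('a) = 1" using e by (simp add: power_mult_distrib[symmetric])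
    finally show ?thesis using I by (simp add: mult.assoc[symmetric])
  qed
  finally show ?thesis .
qed

lemma quot_le_lip:
  fixes f :: "'a::euclidean_space \<Rightarrow> real"
  assumes f: "f \<in> borel_measurable lebesgue"
  shows "Linf_norm (\<lambda>x. f (x + h) - f x) / ennreal (norm h) \<le> lip_seminorm f"
proof (cases "h = 0")
  case True
  have "Linf_norm (\<lambda>x. f (x + h) - f x) = 0" using DD_zero[OF f] True by (simp add: DD_def)
  then show ?thesis by simp
next
  case False
  then show ?thesis unfolding lip_seminorm_def by (intro SUP_upper) auto
qed

lemma Fm_upper:
  fixes f \<rho> :: "'a::euclidean_space \<Rightarrow> real"
  assumes rm: "radial_mollifier \<rho>" and e: "0 < \<epsilon>" and mono: "mono_on {0..} \<omega>"
    and f: "f \<in> borel_measurable lebesgue"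
  shows "Fm \<omega> \<rho> f \<epsilon> \<le> omega_ext \<omega> (lip_seminorm f)"
proof -
  have int: "integrable lebesgue \<rho>" using rm unfolding radial_mollifier_def by blast
  have \<rho>m[measurable]: "\<rho> \<in> borel_measurable lebesgue" using int by (rule borel_measurable_integrable)
  have "Fm \<omega> \<rho> f \<epsilon> \<le> (\<integral>\<^sup>+h. ennreal (rescale \<rho> \<epsilon> h) * omega_ext \<omega> (lip_seminorm f) \<partial>lebesgue)"
    unfolding Fm_def
    by (intro nn_integral_mono mult_left_mono omega_ext_mono[OF mono] quot_le_lip[OF f]) simp
  also have "\<dots> = (\<integral>\<^sup>+h. ennreal (rescale \<rho> \<epsilon> h) \<partial>lebesgue) * omega_ext \<omega> (lip_seminorm f)"
    by (rule nn_integral_multc) measurable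
  also have "\<dots> = omega_ext \<omega> (lip_seminorm f)" using rescale_integral_one[OF rm e] by simp
  finally show ?thesis .
qed

lemma mollified_upper:
  fixes f \<rho> :: "'a::euclidean_space \<Rightarrow> real"
  assumes rm: "radial_mollifier \<rho>" and mono: "mono_on {0..} \<omega>"
    and f: "f \<in> borel_measurable lebesgue"
  shows "mollified_functional \<omega> \<rho> f \<le> omega_ext \<omega> (lip_seminorm f)"
  unfolding mollified_Fm
proof (rule Limsup_bounded)
  show "\<forall>\<^sub>F \<epsilon> in at_right 0. Fm \<omega> \<rho> f \<epsilon> \<le> omega_ext \<omega> (lip_seminorm f)"
    unfolding eventually_at_right_field
    by (intro exI[of _ 1]) (auto intro!: Fm_upper[OF rm _ mono f])
qed

lemma very_bad_exists:
  fixes f :: "'a::euclidean_space \<Rightarrow> real"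
  assumes "ennreal K < lip_seminorm f" and K: "0 \<le> K"
  shows "\<exists>p. p \<noteq> 0 \<and> ennreal (K * norm p) < DD f p"
proof -
  from assms(1) obtain p where p: "p \<noteq> 0" "ennreal K < DD f p / ennreal (norm p)"
    unfolding lip_seminorm_def less_SUP_iff DD_def by auto
  have "ennreal K * ennreal (norm p) < DD f p"
  proof (rule ccontr)
    assume "\<not> ?thesis"
    then have "DD f p \<le> ennreal K * ennreal (norm p)" by simp
    then have "DD f p / ennreal (norm p) \<le> ennreal K"
      using p by (intro divide_le_posI_ennreal) (auto simp: mult.commute)
    then show False using p by simp
  qed
  then show ?thesis using p K by (auto simp: ennreal_mult)
qed




theorem theorem2p5:
  fixes \<omega> :: "real \<Rightarrow> real" and \<rho> :: "real ^ 'n \<Rightarrow> real"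
  assumes "C_inc_plus \<omega>" and "radial_mollifier \<rho>"
  shows "\<exists>c C. 0 < c \<and> c \<le> C \<and>
    (\<forall>f :: real ^ 'n \<Rightarrow> real. in_Linf f \<longrightarrow>
       (lip_seminorm f < \<infinity> \<longleftrightarrow> mollified_functional \<omega> \<rho> f < \<infinity>) \<and>
       ennreal c * omega_ext \<omega> (lip_seminorm f) \<le> mollified_functional \<omega> \<rho> f \<and>
       mollified_functional \<omega> \<rho> f \<le> ennreal C * omega_ext \<omega> (lip_seminorm f))"
proof -
  let ?N = "DIM(real ^ 'n)"
  have mono: "mono_on {0..} \<omega>" and \<omega>nn: "\<And>t. 0 \<le> t \<Longrightarrow> 0 \<le> \<omega> t" and \<omega>0: "\<omega> 0 = 0"
    and lim: "filterlim \<omega> at_top at_top"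
    using assms(1) unfolding C_inc_plus_def by blast+
  obtain A where A: "A > 0" "\<And>t1 t2. t1 \<ge> 0 \<Longrightarrow> t2 \<ge> 0 \<Longrightarrow> \<omega> (t1 + t2) \<le> A * (\<omega> t1 + \<omega> t2)"
    using assms(1) unfolding C_inc_plus_def by blast
  have rm: "radial_mollifier \<rho>" by fact
  have int: "integrable lebesgue \<rho>" and \<rho>nn: "\<And>x. 0 \<le> \<rho> x" and one: "integral\<^sup>L lebesgue \<rho> = 1"
    and rad: "\<And>x y. norm x = norm y \<Longrightarrow> \<rho> x = \<rho> y"
    using assms(2) unfolding radial_mollifier_def by blast+
  have \<rho>m[measurable]: "\<rho> \<in> borel_measurable lebesgue" using int by (rule borel_measurable_integrable)
  obtain P T where Pm[measurable]: "P \<in> borel_measurable borel" and Tm[measurable]: "T \<in> sets borel"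
    and T0: "emeasure lborel T = 0" and rep: "\<And>u. norm u \<notin> T \<Longrightarrow> \<rho> u = P (norm u)"
    using radial_borel_version[OF \<rho>m rad] by blast
  have I1: "(\<integral>\<^sup>+u. ennreal (\<rho> u) \<partial>lebesgue) = 1"
    using nn_integral_eq_integral[OF int] \<rho>nn one by simp
  have nz: "(\<integral>\<^sup>+u. ennreal (\<rho> u) \<partial>lborel) \<noteq> 0"
    using I1 nn_integral_completion[of lborel "\<lambda>u. ennreal (\<rho> u)"] by simp
  obtain r0 R0 where r0: "0 < r0" "r0 \<le> R0"
    and J: "0 < (\<integral>\<^sup>+s. indicator {r0..R0} s * ennreal (s^(?N-1) * P s) \<partial>lborel)"
    using radial_J_pos[OF Pm Tm T0 rep nz] by blast
  obtain j0 where j0: "0 < j0" "ennreal j0 \<le> (\<integral>\<^sup>+s. indicator {r0..R0} s * ennreal (s^(?N-1) * P s) \<partial>lborel)"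
  proof (cases "(\<integral>\<^sup>+s. indicator {r0..R0} s * ennreal (s^(?N-1) * P s) \<partial>lborel)" rule: ennreal_cases)
    case (real r)
    then show ?thesis using that[of r] J by simp
  next
    case top
    then show ?thesis using that[of 1] by simp
  qed
  obtain v where v: "0 < v" "emeasure lebesgue (ball (0::real^'n) 1) = ennreal v"
    using unit_ball_vol by blast
  define \<kappa> where "\<kappa> = j0 * v / (4 * 5 ^ ?N)"
  have \<kappa>: "0 < \<kappa>" unfolding \<kappa>_def using j0 v by simp
  have key: "ennreal (\<kappa> * \<omega> G) \<le> mollified_functional \<omega> \<rho> f"
    if f: "in_Linf f" and G: "0 \<le> G" and GL: "ennreal (5/4 * G) < lip_seminorm f" for f :: "real^'n \<Rightarrow> real" and G
  proof -
    have fm[measurable]: "f \<in> borel_measurable lebesgue" using f unfolding in_Linf_def by blast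
    obtain p where p: "p \<noteq> 0" "ennreal (5/4 * G * norm p) < DD f p"
      using very_bad_exists[OF GL] G by auto
    show ?thesis unfolding \<kappa>_def
      by (rule lower_bound_G[OF \<rho>m Pm Tm T0 rep r0 j0 v(2) v(1) mono \<omega>nn fm G p])
  qed
  have infin: "mollified_functional \<omega> \<rho> f = \<infinity>"
    if f: "in_Linf f" and L: "lip_seminorm f = \<infinity>" for f :: "real^'n \<Rightarrow> real"
  proof (rule ccontr)
    assume "mollified_functional \<omega> \<rho> f \<noteq> \<infinity>"
    then obtain F0 where F0: "mollified_functional \<omega> \<rho> f = ennreal F0" "0 \<le> F0"
      by (cases "mollified_functional \<omega> \<rho> f" rule: ennreal_cases) auto
    have "eventually (\<lambda>G. F0 / \<kappa> + 1 \<le> \<omega> G) at_top" using lim unfolding filterlim_at_top by blast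
    then have "\<exists>G0. \<forall>G\<ge>G0. F0 / \<kappa> + 1 \<le> \<omega> G" by (simp add: eventually_at_top_linorder)
    then obtain G0 where G0: "\<And>G. G \<ge> G0 \<Longrightarrow> F0 / \<kappa> + 1 \<le> \<omega> G" by blast
    define G where "G = max G0 0"
    have G: "0 \<le> G" "F0 / \<kappa> + 1 \<le> \<omega> G" using G0[of G] unfolding G_def by auto
    have "ennreal (\<kappa> * \<omega> G) \<le> ennreal F0" using key[OF f G(1)] L F0 by simp
    then have "\<kappa> * \<omega> G \<le> F0" using F0 by (simp add: ennreal_le_iff)
    moreover have "F0 < \<kappa> * \<omega> G"
    proof -
      have "\<kappa> * (F0 / \<kappa> + 1) \<le> \<kappa> * \<omega> G" using G(2) \<kappa> by (intro mult_left_mono) auto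
      moreover have "\<kappa> * (F0 / \<kappa> + 1) = F0 + \<kappa>" using \<kappa> by (simp add: field_simps)
      ultimately show ?thesis using \<kappa> by simp
    qed
    ultimately show False by simp
  qed
  define c where "c = min 1 (\<kappa> / (2 * A))"
  have c: "0 < c" "c \<le> 1" "c \<le> \<kappa> / (2 * A)" unfolding c_def using \<kappa> A by auto
  have main: "(lip_seminorm f < \<infinity> \<longleftrightarrow> mollified_functional \<omega> \<rho> f < \<infinity>) \<and>
       ennreal c * omega_ext \<omega> (lip_seminorm f) \<le> mollified_functional \<omega> \<rho> f \<and>
       mollified_functional \<omega> \<rho> f \<le> ennreal 1 * omega_ext \<omega> (lip_seminorm f)"
    if f: "in_Linf f" for f :: "real^'n \<Rightarrow> real"
  proof (intro conjI)
    have fm[measurable]: "f \<in> borel_measurable lebesgue" using f unfolding in_Linf_def by blast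
    have up: "mollified_functional \<omega> \<rho> f \<le> omega_ext \<omega> (lip_seminorm f)"
      by (rule mollified_upper[OF rm mono fm])
    then show "mollified_functional \<omega> \<rho> f \<le> ennreal 1 * omega_ext \<omega> (lip_seminorm f)" by simp
    show "lip_seminorm f < \<infinity> \<longleftrightarrow> mollified_functional \<omega> \<rho> f < \<infinity>"
    proof
      assume "lip_seminorm f < \<infinity>"
      then have "omega_ext \<omega> (lip_seminorm f) < \<infinity>" by (simp add: omega_ext_def)
      then show "mollified_functional \<omega> \<rho> f < \<infinity>" using up by (meson le_less_trans)
    next
      assume "mollified_functional \<omega> \<rho> f < \<infinity>"
      then show "lip_seminorm f < \<infinity>"
      proof (rule contrapos_pp)
        assume "\<not> lip_seminorm f < \<infinity>"
        then have "lip_seminorm f = \<infinity>" using top.not_eq_extremum by fastforce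
        then show "\<not> mollified_functional \<omega> \<rho> f < \<infinity>" using infin[OF f] by simp
      qed
    qed
    show "ennreal c * omega_ext \<omega> (lip_seminorm f) \<le> mollified_functional \<omega> \<rho> f"
    proof (cases "lip_seminorm f" rule: ennreal_cases)
      case top
      then show ?thesis using infin[OF f] by simp
    next
      case (real l)
      show ?thesis
      proof (cases "l = 0")
        case True
        then show ?thesis using real \<omega>0 by (simp add: omega_ext_def)
      next
        case False
        then have lpos: "0 < l" using real by simp
        have GL: "ennreal (5/4 * (l/2)) < lip_seminorm f" using real lpos by (simp add: ennreal_less_iff)
        have k: "ennreal (\<kappa> * \<omega> (l/2)) \<le> mollified_functional \<omega> \<rho> f"
          by (rule key[OF f _ GL]) (use lpos in simp)
        have "\<omega> l \<le> A * (\<omega> (l/2) + \<omega> (l/2))" using A(2)[of "l/2" "l/2"] lpos by simp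
        then have \<omega>l: "\<omega> l \<le> 2 * A * \<omega> (l/2)" by simp
        have \<omega>lnn: "0 \<le> \<omega> l" using \<omega>nn lpos by simp
        have "c * \<omega> l \<le> \<kappa> / (2 * A) * \<omega> l" using c(3) \<omega>lnn by (rule mult_right_mono)
        also have "\<dots> \<le> \<kappa> / (2 * A) * (2 * A * \<omega> (l/2))"
          using \<omega>l \<kappa> A by (intro mult_left_mono) auto
        also have "\<dots> = \<kappa> * \<omega> (l/2)" using A by simp
        finally have le: "c * \<omega> l \<le> \<kappa> * \<omega> (l/2)" .
        have "ennreal c * omega_ext \<omega> (lip_seminorm f) = ennreal (c * \<omega> l)"
          using real c by (simp add: omega_ext_def ennreal_mult')
        also have "\<dots> \<le> ennreal (\<kappa> * \<omega> (l/2))" using le by (rule ennreal_leI)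
        also have "\<dots> \<le> mollified_functional \<omega> \<rho> f" by (rule k)
        finally show ?thesis .
      qed
    qed
  qed
  show ?thesis using c main by blast
qed


end
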